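(* Let $n\ge1$, let $N:[t_0,+\infty)\times\mathbb R^m\to\mathbb R^{m\times m}$ be continuous in $t$ and $n$ times continuously differentiable in $u$ (derivatives continuous in $(t,u)$), and let $\tilde N\in C^n(\mathbb R)$ satisfy $\tilde N^{(k)}(u)\ge0$ for $u\ge0$, $k\in\{0,\dots,n\}$, and $$\sum_{\substack{k_1+\dots+k_m=k\\k_i\ge0}}\frac{k!}{k_1!\cdots k_m!}\Big\|\frac{\partial^kN(t,u)}{\partial u_1^{k_1}\cdots\partial u_m^{k_m}}\Big\|\le\tilde N^{(k)}(\|u\|)\quad\text{for all }(t,u)\in[t_0,\infty)\times\mathbb R^m,\ k\in\{0,\dots,n\}.$$ Then for every $t\ge t_0$: (a) $\|A_k(N(t,\cdot);u_0(t),\dots,u_k(t))\|\le A_k(\tilde N;|||u_0|||_0,\dots,|||u_k|||_0)$ for all $u_0,\dots,u_k\in V_m(\mathbb Q)$, $k\in\{0,\dots,n-1\}$; (b) $\|A_k(N(t,\cdot);u_0(t),\dots,u_k(t))-A_k(N(t,\cdot);P_h(u_0)(t),\dots,P_h(u_k)(t))\|\le h\,A_k(g;|||u_0|||,\dots,|||u_k|||)$ for all $u_0,\dots,u_k\in V_m(\mathbb Q^1_\omega)$, $k\in\{0,\dots,n-2\}$, where $g(u)=\tilde N'(u)u$.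
   Context: $\|\cdot\|$: Euclidean norm on $\mathbb R^m$ and induced operator norm on $\mathbb R^{m\times m}$. $V_m(\mathbb Q)$: bounded piecewise continuous functions $[t_0,\infty)\to\mathbb R^m$, with $|||u|||_0=\sup_{t\ge t_0}\|u(t)\|$. Grid $\hat\omega=\{t_0<t_1<\dots\}$, $t_n\to\infty$, $h=\sup_i(t_i-t_{i-1})$. $V_m(\mathbb Q^1_\omega)$: bounded continuous functions $[t_0,\infty)\to\mathbb R^m$ continuously differentiable on each $(t_{i-1},t_i)$ with finite one-sided derivatives at grid points and bounded derivative; $|||u|||_1=\sup_t\|u'(t)\|$ (sup over points of differentiability/one-sided derivatives), $|||u|||=\max\{|||u|||_0,|||u|||_1\}$. $P_h(u)(t)=u(t_{i-1})$ for $t\in[t_{i-1},t_i)$. Adomian polynomials: $A_k(N(t,\cdot);v_0,\dots,v_k)=\frac1{k!}\frac{d^k}{d\tau^k}N(t,\sum_{i=0}^k\tau^iv_i)|_{\tau=0}$ for $v_i\in\mathbb R^m$; for a real function $f$, $A_k(f;x_0,\dots,x_k)=\frac1{k!}\frac{d^k}{d\tau^k}f(\sum_{i=0}^k\tau^ix_i)|_{\tau=0}$. *)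

theory Defs
  imports "HOL-Analysis.Analysis"
begin

fun vderiv_iter :: "nat \<Rightarrow> (real \<Rightarrow> 'a::real_normed_vector) \<Rightarrow> real \<Rightarrow> 'a" where
  "vderiv_iter 0 f = f"
| "vderiv_iter (Suc k) f = (\<lambda>x. vector_derivative (vderiv_iter k f) (at x))"

definition partial_u :: "'m::finite \<Rightarrow> (real^'m \<Rightarrow> 'a::real_normed_vector) \<Rightarrow> real^'m \<Rightarrow> 'a" where
  "partial_u i F u = vector_derivative (\<lambda>s. F (u + s *\<^sub>R axis i 1)) (at 0)"

text \<open>Iterated partial derivatives along a list of coordinates (last element applied first).\<close>
fun partials :: "'m::finite list \<Rightarrow> (real^'m \<Rightarrow> 'a::real_normed_vector) \<Rightarrow> real^'m \<Rightarrow> 'a" where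
  "partials [] F = F"
| "partials (i # is) F = partial_u i (partials is F)"

text \<open>Mixed partial derivative for a multi-index kappa (kappa i = number of differentiations
  in u_i).  Under the C^n hypothesis the order of differentiation is irrelevant.\<close>
definition mixed_partial :: "('m::finite \<Rightarrow> nat) \<Rightarrow> (real^'m \<Rightarrow> 'a::real_normed_vector) \<Rightarrow> real^'m \<Rightarrow> 'a" where
  "mixed_partial \<kappa> F = partials (SOME is. \<forall>i. count (mset is) i = \<kappa> i) F"

definition mat_norm :: "real^'m^'m \<Rightarrow> real" where
  "mat_norm M = onorm (\<lambda>x. M *v x)"

definition adomian :: "nat \<Rightarrow> ('a::real_normed_vector \<Rightarrow> 'b::real_normed_vector) \<Rightarrow> (nat \<Rightarrow> 'a) \<Rightarrow> 'b" where
  "adomian k F vs = (1 / fact k) *\<^sub>R vderiv_iter k (\<lambda>\<tau>. F (\<Sum>i\<le>k. \<tau> ^ i *\<^sub>R vs i)) 0"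

definition piecewise_continuous :: "real \<Rightarrow> (real \<Rightarrow> 'a::real_normed_vector) \<Rightarrow> bool" where
  "piecewise_continuous t0 u \<longleftrightarrow>
     (\<forall>b. \<exists>S. finite S \<and> (\<forall>x\<in>{t0..b} - S. continuous (at x within {t0..}) u) \<and>
        (\<forall>s\<in>S. (s > t0 \<longrightarrow> (\<exists>l. (u \<longlongrightarrow> l) (at_left s))) \<and> (\<exists>l. (u \<longlongrightarrow> l) (at_right s))))"

definition V0 :: "real \<Rightarrow> (real \<Rightarrow> real^'m) set" where
  "V0 t0 = {u. bounded (u ` {t0..}) \<and> piecewise_continuous t0 u}"

definition norm0 :: "real \<Rightarrow> (real \<Rightarrow> real^'m) \<Rightarrow> real" where
  "norm0 t0 u = (SUP t\<in>{t0..}. norm (u t))"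

text \<open>Grid t0 = grid 0 < grid 1 < ..., tending to infinity, with bounded step sizes
  (so that h is a real number).\<close>
definition is_grid :: "real \<Rightarrow> (nat \<Rightarrow> real) \<Rightarrow> bool" where
  "is_grid t0 grid \<longleftrightarrow> grid 0 = t0 \<and> strict_mono grid \<and> filterlim grid at_top sequentially \<and>
     bdd_above (range (\<lambda>i. grid (Suc i) - grid i))"

definition step_h :: "(nat \<Rightarrow> real) \<Rightarrow> real" where
  "step_h grid = (SUP i. grid (Suc i) - grid i)"

text \<open>Norms of the (one-sided) derivatives on the closed grid intervals; at interior points these are
  the ordinary derivatives, at grid points the left/right derivatives.\<close>
definition deriv_norms :: "(nat \<Rightarrow> real) \<Rightarrow> (real \<Rightarrow> real^'m) \<Rightarrow> real set" where
  "deriv_norms grid u = {norm (vector_derivative u (at x within {grid i..grid (Suc i)})) | i x.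
       x \<in> {grid i..grid (Suc i)}}"

definition V1 :: "real \<Rightarrow> (nat \<Rightarrow> real) \<Rightarrow> (real \<Rightarrow> real^'m) set" where
  "V1 t0 grid = {u. bounded (u ` {t0..}) \<and> continuous_on {t0..} u \<and>
     (\<forall>i. \<forall>x\<in>{grid i..grid (Suc i)}. u differentiable (at x within {grid i..grid (Suc i)})) \<and>
     (\<forall>i. continuous_on {grid i<..<grid (Suc i)} (\<lambda>x. vector_derivative u (at x))) \<and>
     bdd_above (deriv_norms grid u)}"

definition norm1 :: "(nat \<Rightarrow> real) \<Rightarrow> (real \<Rightarrow> real^'m) \<Rightarrow> real" where
  "norm1 grid u = Sup (deriv_norms grid u)"

definition normV :: "real \<Rightarrow> (nat \<Rightarrow> real) \<Rightarrow> (real \<Rightarrow> real^'m) \<Rightarrow> real" where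
  "normV t0 grid u = max (norm0 t0 u) (norm1 grid u)"

definition Ph :: "(nat \<Rightarrow> real) \<Rightarrow> (real \<Rightarrow> 'a) \<Rightarrow> real \<Rightarrow> 'a" where
  "Ph grid u t = u (grid (THE i. grid i \<le> t \<and> t < grid (Suc i)))"

end

theory Submission
  imports Defs "HOL-Combinatorics.Multiset_Permutations"
begin

lemma mvt_vd:
  fixes f :: "real \<Rightarrow> 'b::real_normed_vector"
  assumes "a \<le> b"
    and d: "\<And>x. x \<in> {a..b} \<Longrightarrow> (f has_vector_derivative f' x) (at x)"
    and B: "\<And>x. x \<in> {a..b} \<Longrightarrow> norm (f' x) \<le> B"
  shows "norm (f b - f a) \<le> B * (b - a)"
proof -
  have "norm (f b - f a) \<le> B * norm (b - a)"
  proof (rule differentiable_bound[where S="{a..b}" and f'="\<lambda>x h. h *\<^sub>R f' x"])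
    fix x assume x: "x \<in> {a..b}"
    show "(f has_derivative (\<lambda>h. h *\<^sub>R f' x)) (at x within {a..b})"
      using d[OF x] unfolding has_vector_derivative_def by (rule has_derivative_at_withinI)
    show "onorm (\<lambda>h. h *\<^sub>R f' x) \<le> B"
      using B[OF x] by (simp add: onorm_scaleR_left onorm_id)
  qed (use assms in auto)
  then show ?thesis using assms by simp
qed

lemma shift_vd:
  fixes G :: "'a::real_normed_vector \<Rightarrow> 'b::real_normed_vector"
  assumes "\<And>u. ((\<lambda>s. G (u + s *\<^sub>R e)) has_vector_derivative G' u) (at 0)"
  shows "((\<lambda>s. G (w + s *\<^sub>R e)) has_vector_derivative G' (w + r *\<^sub>R e)) (at r)"
proof -
  have 1: "((\<lambda>s. s - r) has_vector_derivative 1) (at r)"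
    by (auto intro!: derivative_eq_intros)
  have 2: "((\<lambda>s. G ((w + r *\<^sub>R e) + s *\<^sub>R e)) has_vector_derivative G' (w + r *\<^sub>R e)) (at ((\<lambda>s. s - r) r))"
    using assms[of "w + r *\<^sub>R e"] by simp
  have "((\<lambda>s. G ((w + r *\<^sub>R e) + s *\<^sub>R e)) \<circ> (\<lambda>s. s - r) has_vector_derivative 1 *\<^sub>R G' (w + r *\<^sub>R e)) (at r)"
    by (rule vector_diff_chain_at[OF 1 2])
  moreover have "(\<lambda>s. G ((w + r *\<^sub>R e) + s *\<^sub>R e)) \<circ> (\<lambda>s. s - r) = (\<lambda>s. G (w + s *\<^sub>R e))"
    by (auto simp: o_def algebra_simps)
  ultimately show ?thesis by simp
qed


lemma axis_comp: "(\<Sum>k\<in>S. c k *\<^sub>R axis k (1::real)) $ m = (if m \<in> S then c m else (0::real))"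
  by (cases "finite S") (auto simp: axis_def if_distrib cong: if_cong)

lemma frechet_partials:
  fixes G :: "real^'m \<Rightarrow> 'b::real_normed_vector"
  assumes D: "\<And>i u. ((\<lambda>s. G (u + s *\<^sub>R axis i 1)) has_vector_derivative Gs i u) (at 0)"
    and C: "\<And>i. continuous_on UNIV (Gs i)"
  shows "(G has_derivative (\<lambda>h. \<Sum>i\<in>UNIV. h$i *\<^sub>R Gs i u)) (at u)"
  unfolding has_derivative_at_alt
proof (intro conjI allI impI)
  show "bounded_linear (\<lambda>h. \<Sum>i\<in>UNIV. h$i *\<^sub>R Gs i u)"
    by (intro bounded_linear_sum bounded_linear_compose[OF bounded_linear_scaleR_left] bounded_linear_vec_nth)
  fix e :: real assume e: "e > 0"
  define \<epsilon> where "\<epsilon> = e / real CARD('m)"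
  have \<epsilon>: "\<epsilon> > 0" using e by (simp add: \<epsilon>_def)
  have "\<forall>\<^sub>F w in at u. \<forall>i. dist (Gs i w) (Gs i u) < \<epsilon>"
  proof (rule eventually_all_finite)
    fix i
    have "isCont (Gs i) u" using C[of i] by (simp add: continuous_on_eq_continuous_at)
    then have "(Gs i \<longlongrightarrow> Gs i u) (at u)" by (simp add: isCont_def)
    then show "\<forall>\<^sub>F w in at u. dist (Gs i w) (Gs i u) < \<epsilon>"
      using \<epsilon> by (rule tendstoD)
  qed
  then obtain d where d: "d > 0" and dd0: "\<And>w i. w \<noteq> u \<Longrightarrow> dist w u < d \<Longrightarrow> dist (Gs i w) (Gs i u) < \<epsilon>"
    unfolding eventually_at by auto
  have dd: "dist (Gs i w) (Gs i u) < \<epsilon>" if "dist w u < d" for w i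
    using dd0[OF _ that] \<epsilon> by (cases "w = u") auto
  show "\<exists>d>0. \<forall>y. norm (y - u) < d \<longrightarrow>
      norm (G y - G u - (\<Sum>i\<in>UNIV. (y - u)$i *\<^sub>R Gs i u)) \<le> e * norm (y - u)"
  proof (intro exI[of _ d] conjI allI impI d)
    fix y assume y: "norm (y - u) < d"
    define h where "h = y - u"
    have tele: "norm (G (u + (\<Sum>k\<in>S. h$k *\<^sub>R axis k 1)) - G u - (\<Sum>k\<in>S. h$k *\<^sub>R Gs k u))
        \<le> (\<Sum>k\<in>S. \<bar>h$k\<bar>) * \<epsilon>" for S
    proof (induction S rule: finite_induct[OF finite])
      case 1 then show ?case by simp
    next
      case (2 i S)
      define p where "p = u + (\<Sum>k\<in>S. h$k *\<^sub>R axis k 1)"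
      define f where "f = (\<lambda>r. G (p + r *\<^sub>R axis i 1) - r *\<^sub>R Gs i u)"
      have fd: "(f has_vector_derivative (Gs i (p + r *\<^sub>R axis i 1) - Gs i u)) (at r)" for r
        unfolding f_def
        by (rule derivative_eq_intros shift_vd[OF D] | simp)+
      have fb: "norm (Gs i (p + r *\<^sub>R axis i 1) - Gs i u) \<le> \<epsilon>" if r: "\<bar>r\<bar> \<le> \<bar>h$i\<bar>" for r
      proof -
        have "norm (p + r *\<^sub>R axis i 1 - u) \<le> norm h"
        proof (rule norm_le_componentwise_cart)
          fix m
          have "(p + r *\<^sub>R axis i 1 - u) $ m = (if m \<in> S then h$m else 0) + (if m = i then r else 0)"
          proof -
            have "(p + r *\<^sub>R axis i 1 - u) $ m = (\<Sum>k\<in>S. h$k *\<^sub>R axis k 1)$m + r * (axis i 1 $ m)"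
              unfolding p_def by simp
            also have "\<dots> = (if m \<in> S then h$m else 0) + (if m = i then r else 0)"
              unfolding axis_comp by (simp add: axis_def)
            finally show ?thesis .
          qed
          then show "norm ((p + r *\<^sub>R axis i 1 - u) $ m) \<le> norm (h $ m)"
            using 2(2) r by auto
        qed
        then have "dist (p + r *\<^sub>R axis i 1) u < d" using y by (simp add: dist_norm h_def)
        from dd[OF this, of i] show ?thesis by (simp add: dist_norm less_imp_le)
      qed
      have step: "norm (f (h$i) - f 0) \<le> \<epsilon> * \<bar>h$i\<bar>"
      proof (cases "h$i \<ge> 0")
        case True
        have "norm (f (h$i) - f 0) \<le> \<epsilon> * (h$i - 0)"
          by (rule mvt_vd[OF True fd fb]) auto
        then show ?thesis using True by simp
      next
        case False
        have "norm (f 0 - f (h$i)) \<le> \<epsilon> * (0 - h$i)"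
          by (rule mvt_vd[OF _ fd fb]) (use False in auto)
        then show ?thesis using False by (simp add: norm_minus_commute)
      qed
      have eq: "G (u + (\<Sum>k\<in>insert i S. h$k *\<^sub>R axis k 1)) - G u - (\<Sum>k\<in>insert i S. h$k *\<^sub>R Gs k u)
          = (f (h$i) - f 0) + (G (u + (\<Sum>k\<in>S. h$k *\<^sub>R axis k 1)) - G u - (\<Sum>k\<in>S. h$k *\<^sub>R Gs k u))"
        using 2(1,2) by (simp add: f_def p_def algebra_simps)
      have "norm (G (u + (\<Sum>k\<in>insert i S. h$k *\<^sub>R axis k 1)) - G u - (\<Sum>k\<in>insert i S. h$k *\<^sub>R Gs k u))
          \<le> \<epsilon> * \<bar>h$i\<bar> + (\<Sum>k\<in>S. \<bar>h$k\<bar>) * \<epsilon>"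
        unfolding eq using step 2(3) by (meson norm_triangle_le add_mono)
      then show ?case using 2(1,2) by (simp add: algebra_simps)
    qed
    have hu: "u + (\<Sum>k\<in>UNIV. h$k *\<^sub>R axis k 1) = y"
      unfolding vec_eq_iff vector_add_component axis_comp[of "\<lambda>k. h$k" UNIV] by (simp add: h_def)
    have "(\<Sum>k\<in>UNIV. \<bar>h$k\<bar>) \<le> real CARD('m) * norm h"
      using sum_bounded_above[of UNIV "\<lambda>k. \<bar>h$k\<bar>" "norm h"] component_le_norm_cart by auto
    then have "(\<Sum>k\<in>UNIV. \<bar>h$k\<bar>) * \<epsilon> \<le> e * norm h"
      using \<epsilon> by (simp add: \<epsilon>_def field_simps)
    with tele[of UNIV] show "norm (G y - G u - (\<Sum>i\<in>UNIV. (y - u)$i *\<^sub>R Gs i u)) \<le> e * norm (y - u)"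
      unfolding hu by (simp add: h_def)
  qed
qed


lemma schwarz_half:
  fixes G :: "real^'m \<Rightarrow> 'b::real_normed_vector"
  assumes DG: "\<And>w. ((\<lambda>s. G (w + s *\<^sub>R axis i 1)) has_vector_derivative Gi w) (at 0)"
    and DGi: "\<And>w. ((\<lambda>s. Gi (w + s *\<^sub>R axis j 1)) has_vector_derivative Gji w) (at 0)"
    and C: "isCont Gji u" and e: "\<epsilon> > 0"
  shows "\<exists>\<delta>>0. \<forall>s. 0 < s \<and> s < \<delta> \<longrightarrow>
    norm (G (u + s *\<^sub>R axis j 1 + s *\<^sub>R axis i 1) - G (u + s *\<^sub>R axis i 1) - G (u + s *\<^sub>R axis j 1) + G u
       - (s * s) *\<^sub>R Gji u) \<le> \<epsilon> * (s * s)"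
proof -
  obtain d0 where d0: "d0 > 0" and dd: "\<And>w. dist w u < d0 \<Longrightarrow> dist (Gji w) (Gji u) < \<epsilon>"
    using C e unfolding continuous_at_eps_delta by blast
  show ?thesis
  proof (intro exI[of _ "d0/2"] conjI allI impI)
    show "d0/2 > 0" using d0 by simp
    fix s assume s: "0 < s \<and> s < d0/2"
    have inner: "norm (Gi (u + r *\<^sub>R axis i 1 + s *\<^sub>R axis j 1) - Gi (u + r *\<^sub>R axis i 1) - s *\<^sub>R Gji u) \<le> \<epsilon> * s"
      if r: "r \<in> {0..s}" for r
    proof -
      define \<psi> where "\<psi> = (\<lambda>q. Gi (u + r *\<^sub>R axis i 1 + q *\<^sub>R axis j 1) - q *\<^sub>R Gji u)"
      have "norm (\<psi> s - \<psi> 0) \<le> \<epsilon> * (s - 0)"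
      proof (rule mvt_vd)
        fix q assume q: "q \<in> {0..s}"
        show "(\<psi> has_vector_derivative (Gji (u + r *\<^sub>R axis i 1 + q *\<^sub>R axis j 1) - Gji u)) (at q)"
          unfolding \<psi>_def by (rule derivative_eq_intros shift_vd[OF DGi] | simp)+
        have "norm (r *\<^sub>R axis i 1 + q *\<^sub>R axis j 1 :: real^'m) \<le> norm (r *\<^sub>R axis i 1 :: real^'m) + norm (q *\<^sub>R axis j 1 :: real^'m)"
          by (rule norm_triangle_ineq)
        also have "\<dots> = \<bar>r\<bar> + \<bar>q\<bar>" by simp
        also have "\<dots> < d0" using r q s by auto
        finally have "dist (u + r *\<^sub>R axis i 1 + q *\<^sub>R axis j 1) u < d0"
          by (simp add: dist_norm)
        from dd[OF this] show "norm (Gji (u + r *\<^sub>R axis i 1 + q *\<^sub>R axis j 1) - Gji u) \<le> \<epsilon>"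
          by (simp add: dist_norm)
      qed (use s in auto)
      then show ?thesis by (simp add: \<psi>_def algebra_simps)
    qed
    define \<phi> where "\<phi> = (\<lambda>r. G (u + s *\<^sub>R axis j 1 + r *\<^sub>R axis i 1) - G (u + r *\<^sub>R axis i 1) - (r * s) *\<^sub>R Gji u)"
    have "norm (\<phi> s - \<phi> 0) \<le> (\<epsilon> * s) * (s - 0)"
    proof (rule mvt_vd)
      fix r assume r: "r \<in> {0..s}"
      show "(\<phi> has_vector_derivative (Gi (u + s *\<^sub>R axis j 1 + r *\<^sub>R axis i 1) - Gi (u + r *\<^sub>R axis i 1) - s *\<^sub>R Gji u)) (at r)"
        unfolding \<phi>_def by (rule derivative_eq_intros shift_vd[OF DG] | simp)+
      show "norm (Gi (u + s *\<^sub>R axis j 1 + r *\<^sub>R axis i 1) - Gi (u + r *\<^sub>R axis i 1) - s *\<^sub>R Gji u) \<le> \<epsilon> * s"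
        using inner[OF r] by (simp add: add_ac)
    qed (use s in auto)
    then show "norm (G (u + s *\<^sub>R axis j 1 + s *\<^sub>R axis i 1) - G (u + s *\<^sub>R axis i 1) - G (u + s *\<^sub>R axis j 1) + G u
       - (s * s) *\<^sub>R Gji u) \<le> \<epsilon> * (s * s)"
      by (simp add: \<phi>_def algebra_simps)
  qed
qed

lemma schwarz:
  fixes G :: "real^'m \<Rightarrow> 'b::real_normed_vector"
  assumes DGi: "\<And>w. ((\<lambda>s. G (w + s *\<^sub>R axis i 1)) has_vector_derivative Gi w) (at 0)"
    and DGj: "\<And>w. ((\<lambda>s. G (w + s *\<^sub>R axis j 1)) has_vector_derivative Gj w) (at 0)"
    and DGji: "\<And>w. ((\<lambda>s. Gi (w + s *\<^sub>R axis j 1)) has_vector_derivative Gji w) (at 0)"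
    and DGij: "\<And>w. ((\<lambda>s. Gj (w + s *\<^sub>R axis i 1)) has_vector_derivative Gij w) (at 0)"
    and C1: "continuous_on UNIV Gji" and C2: "continuous_on UNIV Gij"
  shows "Gji u = Gij u"
proof -
  have le: "norm (Gji u - Gij u) \<le> 2 * \<epsilon>" if e: "\<epsilon> > 0" for \<epsilon>
  proof -
    obtain d1 where d1: "d1 > 0" and h1: "\<And>s. 0 < s \<and> s < d1 \<Longrightarrow>
      norm (G (u + s *\<^sub>R axis j 1 + s *\<^sub>R axis i 1) - G (u + s *\<^sub>R axis i 1) - G (u + s *\<^sub>R axis j 1) + G u
       - (s * s) *\<^sub>R Gji u) \<le> \<epsilon> * (s * s)"
      using schwarz_half[OF DGi DGji _ e, of u] C1 by (auto simp: continuous_on_eq_continuous_at)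
    obtain d2 where d2: "d2 > 0" and h2: "\<And>s. 0 < s \<and> s < d2 \<Longrightarrow>
      norm (G (u + s *\<^sub>R axis i 1 + s *\<^sub>R axis j 1) - G (u + s *\<^sub>R axis j 1) - G (u + s *\<^sub>R axis i 1) + G u
       - (s * s) *\<^sub>R Gij u) \<le> \<epsilon> * (s * s)"
      using schwarz_half[OF DGj DGij _ e, of u] C2 by (auto simp: continuous_on_eq_continuous_at)
    define s where "s = min d1 d2 / 2"
    have s: "0 < s" "s < d1" "s < d2" using d1 d2 by (auto simp: s_def)
    define \<Delta> where "\<Delta> = G (u + s *\<^sub>R axis j 1 + s *\<^sub>R axis i 1) - G (u + s *\<^sub>R axis i 1) - G (u + s *\<^sub>R axis j 1) + G u"
    have a: "norm (\<Delta> - (s * s) *\<^sub>R Gji u) \<le> \<epsilon> * (s * s)" using h1 s unfolding \<Delta>_def by auto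
    have b: "norm (\<Delta> - (s * s) *\<^sub>R Gij u) \<le> \<epsilon> * (s * s)"
    proof -
      have "\<Delta> = G (u + s *\<^sub>R axis i 1 + s *\<^sub>R axis j 1) - G (u + s *\<^sub>R axis j 1) - G (u + s *\<^sub>R axis i 1) + G u"
        unfolding \<Delta>_def by (simp add: algebra_simps)
      then show ?thesis using h2 s by simp
    qed
    have "(s * s) *\<^sub>R (Gji u - Gij u) = (\<Delta> - (s * s) *\<^sub>R Gij u) - (\<Delta> - (s * s) *\<^sub>R Gji u)"
      by (simp add: algebra_simps)
    then have "norm ((s * s) *\<^sub>R (Gji u - Gij u)) \<le> \<epsilon> * (s * s) + \<epsilon> * (s * s)"
      using a b by (metis norm_triangle_le_diff add_mono)
    moreover have "norm ((s * s) *\<^sub>R (Gji u - Gij u)) = (s * s) * norm (Gji u - Gij u)"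
      using s by simp
    ultimately have "(s * s) * norm (Gji u - Gij u) \<le> (s * s) * (2 * \<epsilon>)" by (simp add: algebra_simps)
    then show ?thesis using s by (simp add: mult_le_cancel_left_pos)
  qed
  have "norm (Gji u - Gij u) \<le> 0"
  proof (rule field_le_epsilon)
    fix e :: real assume "e > 0"
    then show "norm (Gji u - Gij u) \<le> 0 + e" using le[of "e/2"] by simp
  qed
  then show ?thesis by simp
qed


lemma partials_append: "partials (p @ q) F = partials p (partials q F)"
  by (induction p) auto

lemma length_count: "length is = (\<Sum>i\<in>(UNIV::'m::finite set). count (mset is) i)"
proof (induction "is")
  case Nil then show ?case by simp
next
  case (Cons a xs)
  have "(\<Sum>i\<in>(UNIV::'m set). count (mset (a # xs)) i) = (\<Sum>i\<in>UNIV. count (mset xs) i + (if i = a then 1 else 0))"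
    by (intro sum.cong) auto
  also have "\<dots> = (\<Sum>i\<in>UNIV. count (mset xs) i) + 1" by (simp add: sum.distrib)
  finally show ?case using Cons by simp
qed

locale adom =
  fixes F :: "real^'m \<Rightarrow> real^'m^'m" and n :: nat and Nd :: "nat \<Rightarrow> real \<Rightarrow> real"
  assumes P: "\<And>is u i. length is < n \<Longrightarrow>
      ((\<lambda>s. partials is F (u + s *\<^sub>R axis i 1)) has_vector_derivative partials (i # is) F u) (at 0)"
    and PC: "\<And>is. 1 \<le> length is \<Longrightarrow> length is \<le> n \<Longrightarrow> continuous_on UNIV (partials is F)"
    and ND: "\<And>k x. k < n \<Longrightarrow> (Nd k has_real_derivative Nd (Suc k) x) (at x)"
    and NN: "\<And>k u. k \<le> n \<Longrightarrow> 0 \<le> u \<Longrightarrow> 0 \<le> Nd k u"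
    and BND: "\<And>u k. k \<le> n \<Longrightarrow>
      (\<Sum>\<kappa>\<in>{\<kappa>::'m \<Rightarrow> nat. (\<Sum>i\<in>UNIV. \<kappa> i) = k}.
             (fact k / (\<Prod>i\<in>UNIV. fact (\<kappa> i))) * mat_norm (mixed_partial \<kappa> F u))
          \<le> Nd k (norm u)"
begin

lemma swap_core:
  assumes "length q + 2 \<le> n"
  shows "partials (i # j # q) F = partials (j # i # q) F"
proof
  fix u
  have "partials (j # i # q) F u = partials (i # j # q) F u"
  proof (rule schwarz[where G="partials q F" and Gi="partials (i # q) F" and Gj="partials (j # q) F"])
    show "((\<lambda>s. partials q F (w + s *\<^sub>R axis i 1)) has_vector_derivative partials (i # q) F w) (at 0)" for w
      by (rule P) (use assms in auto)
    show "((\<lambda>s. partials q F (w + s *\<^sub>R axis j 1)) has_vector_derivative partials (j # q) F w) (at 0)" for w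
      by (rule P) (use assms in auto)
    show "((\<lambda>s. partials (i # q) F (w + s *\<^sub>R axis j 1)) has_vector_derivative partials (j # i # q) F w) (at 0)" for w
      by (rule P) (use assms in auto)
    show "((\<lambda>s. partials (j # q) F (w + s *\<^sub>R axis i 1)) has_vector_derivative partials (i # j # q) F w) (at 0)" for w
      by (rule P) (use assms in auto)
    show "continuous_on UNIV (partials (j # i # q) F)" by (rule PC) (use assms in auto)
    show "continuous_on UNIV (partials (i # j # q) F)" by (rule PC) (use assms in auto)
  qed
  then show "partials (i # j # q) F u = partials (j # i # q) F u" by simp
qed

lemma swap:
  assumes "length (p @ i # j # q) \<le> n"
  shows "partials (p @ i # j # q) F = partials (p @ j # i # q) F"
  using swap_core[of q i j] assms by (simp add: partials_append[of p])

lemma move_front: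
  assumes "length (p @ x # q) \<le> n"
  shows "partials (p @ x # q) F = partials (x # p @ q) F"
  using assms
proof (induction p)
  case Nil then show ?case by simp
next
  case (Cons y p)
  have "partials ((y # p) @ x # q) F = partial_u y (partials (p @ x # q) F)" by simp
  also have "\<dots> = partial_u y (partials (x # p @ q) F)" using Cons by simp
  also have "\<dots> = partials ([] @ y # x # (p @ q)) F" by simp
  also have "\<dots> = partials ([] @ x # y # (p @ q)) F" by (rule swap) (use Cons.prems in simp)
  finally show ?case by simp
qed

lemma partials_perm:
  "mset is = mset is' \<Longrightarrow> length is \<le> n \<Longrightarrow> partials is F = partials is' F"
proof (induction "is" arbitrary: is')
  case Nil then show ?case by simp
next
  case (Cons x r)
  have "x \<in> set is'" using Cons.prems(1) by (metis list.set_intros(1) set_mset_mset)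
  then obtain p q where pq: "is' = p @ x # q" by (meson split_list)
  have len: "length is' = length (x # r)" using Cons.prems(1) by (metis size_mset)
  have "partials is' F = partials (x # p @ q) F"
    unfolding pq by (rule move_front) (use len Cons.prems(2) pq in simp)
  also have "\<dots> = partial_u x (partials (p @ q) F)" by simp
  also have "partials (p @ q) F = partials r F"
  proof -
    have "mset r = mset (p @ q)" using Cons.prems(1) pq by simp
    from Cons.IH[OF this] Cons.prems(2) show ?thesis by simp
  qed
  finally show ?case by simp
qed

lemma mixed_eq:
  assumes "length is \<le> n"
  shows "mixed_partial (\<lambda>i. count (mset is) i) F = partials is F"
proof -
  let ?P = "\<lambda>is'. \<forall>i. count (mset is') i = count (mset is) i"
  have "?P (SOME is'. ?P is')" by (rule someI[of ?P "is"]) simp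
  then have "mset (SOME is'. ?P is') = mset is" by (simp add: multiset_eq_iff)
  then have "partials (SOME is'. ?P is') F = partials is F"
    using partials_perm assms by (metis size_mset)
  then show ?thesis unfolding mixed_partial_def by simp
qed

lemma TB:
  assumes j: "j \<le> n"
  shows "(\<Sum>is\<in>{is::'m list. length is = j}. mat_norm (partials is F u)) \<le> Nd j (norm u)"
proof -
  define L where "L = {is::'m list. length is = j}"
  define K where "K = {\<kappa>::'m \<Rightarrow> nat. (\<Sum>i\<in>UNIV. \<kappa> i) = j}"
  define cnt where "cnt = (\<lambda>is::'m list. \<lambda>i. count (mset is) i)"
  have fL: "finite L" unfolding L_def using finite_lists_length_eq[of "UNIV::'m set" j] by simp
  have "K \<subseteq> PiE UNIV (\<lambda>_. {..j})"
  proof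
    fix \<kappa> assume "\<kappa> \<in> K"
    then have "\<kappa> i \<le> j" for i
    proof -
      have "\<kappa> i \<le> (\<Sum>i\<in>UNIV. \<kappa> i)" by (rule member_le_sum) auto
      then show ?thesis using \<open>\<kappa> \<in> K\<close> unfolding K_def by simp
    qed
    then show "\<kappa> \<in> PiE UNIV (\<lambda>_. {..j})" by (auto simp: PiE_UNIV_domain)
  qed
  then have fK: "finite K" by (rule finite_subset) (intro finite_PiE; simp)
  have img: "cnt ` L \<subseteq> K"
  proof
    fix k assume "k \<in> cnt ` L"
    then obtain xs where "xs \<in> L" "k = cnt xs" by blast
    then show "k \<in> K" unfolding L_def K_def cnt_def using length_count[of xs] by simp
  qed
  have "(\<Sum>is\<in>L. mat_norm (partials is F u)) = (\<Sum>\<kappa>\<in>K. \<Sum>is\<in>{is\<in>L. cnt is = \<kappa>}. mat_norm (partials is F u))"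
    by (rule sum.group[OF fL fK img, symmetric])
  also have "\<dots> = (\<Sum>\<kappa>\<in>K. (fact j / (\<Prod>i\<in>UNIV. fact (\<kappa> i))) * mat_norm (mixed_partial \<kappa> F u))"
  proof (rule sum.cong[OF refl])
    fix \<kappa> assume \<kappa>: "\<kappa> \<in> K"
    define M where "M = (\<Sum>i\<in>UNIV. replicate_mset (\<kappa> i) i)"
    have cM: "count M x = \<kappa> x" for x unfolding M_def by (simp add: count_sum)
    have set_eq: "{is\<in>L. cnt is = \<kappa>} = permutations_of_multiset M"
    proof (intro set_eqI iffI)
      fix xs assume "xs \<in> {is\<in>L. cnt is = \<kappa>}"
      then show "xs \<in> permutations_of_multiset M"
        by (auto simp: permutations_of_multiset_def cnt_def multiset_eq_iff cM)
    next
      fix xs assume "xs \<in> permutations_of_multiset M"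
      then have c: "cnt xs = \<kappa>" by (auto simp: permutations_of_multiset_def cnt_def cM fun_eq_iff)
      then have "length xs = j" using length_count[of xs] \<kappa> unfolding K_def cnt_def by simp
      with c show "xs \<in> {is\<in>L. cnt is = \<kappa>}" by (simp add: L_def)
    qed
    obtain xs where xs: "mset xs = M" using ex_mset by blast
    have szM: "size M = j"
    proof -
      have "cnt xs = \<kappa>" using xs by (auto simp: cnt_def cM fun_eq_iff)
      then have "length xs = j" using length_count[of xs] \<kappa> unfolding K_def cnt_def by simp
      then show ?thesis using xs by auto
    qed
    have pr: "(\<Prod>x\<in>set_mset M. fact (count M x)) = (\<Prod>i\<in>(UNIV::'m set). fact (\<kappa> i) :: nat)"
    proof -
      have "(\<Prod>x\<in>set_mset M. fact (count M x)) = (\<Prod>x\<in>set_mset M. fact (\<kappa> x) :: nat)"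
        by (simp add: cM)
      also have "\<dots> = (\<Prod>i\<in>(UNIV::'m set). fact (\<kappa> i) :: nat)"
        by (rule prod.mono_neutral_left) (auto simp flip: cM simp: not_in_iff)
      finally show ?thesis .
    qed
    have card: "real (card {is\<in>L. cnt is = \<kappa>}) = fact j / (\<Prod>i\<in>UNIV. fact (\<kappa> i))"
    proof -
      have "card {is\<in>L. cnt is = \<kappa>} = fact j div (\<Prod>i\<in>(UNIV::'m set). fact (\<kappa> i))"
        unfolding set_eq card_permutations_of_multiset(1) szM pr ..
      moreover have "(\<Prod>i\<in>(UNIV::'m set). fact (\<kappa> i) :: nat) dvd fact j"
        using card_permutations_of_multiset(2)[of M] unfolding szM pr .
      ultimately show ?thesis by (simp add: real_of_nat_div of_nat_prod)
    qed
    have "(\<Sum>is\<in>{is\<in>L. cnt is = \<kappa>}. mat_norm (partials is F u)) = (\<Sum>is\<in>{is\<in>L. cnt is = \<kappa>}. mat_norm (mixed_partial \<kappa> F u))"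
    proof (rule sum.cong[OF refl])
      fix xs assume "xs \<in> {is\<in>L. cnt is = \<kappa>}"
      then have "length xs \<le> n" "cnt xs = \<kappa>" using j by (auto simp: L_def)
      then show "mat_norm (partials xs F u) = mat_norm (mixed_partial \<kappa> F u)"
        using mixed_eq[of xs] unfolding cnt_def by simp
    qed
    also have "\<dots> = real (card {is\<in>L. cnt is = \<kappa>}) * mat_norm (mixed_partial \<kappa> F u)" by simp
    finally show "(\<Sum>is\<in>{is\<in>L. cnt is = \<kappa>}. mat_norm (partials is F u)) = (fact j / (\<Prod>i\<in>UNIV. fact (\<kappa> i))) * mat_norm (mixed_partial \<kappa> F u)"
      unfolding card .
  qed
  also have "\<dots> \<le> Nd j (norm u)" unfolding K_def by (rule BND[OF j])
  finally show ?thesis unfolding L_def .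
qed

end


definition seqd :: "(nat \<Rightarrow> real \<Rightarrow> 'a::real_normed_vector) \<Rightarrow> bool" where
  "seqd V \<longleftrightarrow> (\<forall>p \<tau>. (V p has_vector_derivative V (Suc p) \<tau>) (at \<tau>))"

definition Cs :: "nat \<Rightarrow> (real \<Rightarrow> 'a::real_normed_vector) \<Rightarrow> (nat \<Rightarrow> real \<Rightarrow> 'a) \<Rightarrow> bool" where
  "Cs l f fs \<longleftrightarrow> fs 0 = f \<and> (\<forall>p<l. \<forall>\<tau>. (fs p has_vector_derivative fs (Suc p) \<tau>) (at \<tau>))"

definition shc :: "'x \<Rightarrow> (nat \<Rightarrow> 'x) \<Rightarrow> nat \<Rightarrow> 'x" where
  "shc a A r = (case r of 0 \<Rightarrow> a | Suc r' \<Rightarrow> A r')"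

lemma shc_0[simp]: "shc a A 0 = a" and shc_Suc[simp]: "shc a A (Suc r) = A r"
  by (simp_all add: shc_def)

lemma seqd_Suc: "seqd V \<Longrightarrow> seqd (V \<circ> Suc)"
  by (simp add: seqd_def)

lemma Cs_vderiv: "Cs l f fs \<Longrightarrow> p \<le> l \<Longrightarrow> vderiv_iter p f = fs p"
proof (induction p)
  case 0 then show ?case by (simp add: Cs_def)
next
  case (Suc p)
  then have IH: "vderiv_iter p f = fs p" by simp
  have d: "\<And>\<tau>. (fs p has_vector_derivative fs (Suc p) \<tau>) (at \<tau>)" using Suc.prems by (simp add: Cs_def)
  show ?case by (rule ext) (simp add: IH vector_derivative_at[OF d])
qed

lemma DERIV_prod_lessThan:
  fixes f :: "nat \<Rightarrow> real \<Rightarrow> real"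
  assumes "\<And>r. r < j \<Longrightarrow> (f r has_real_derivative f' r) (at \<tau>)"
  shows "((\<lambda>t. \<Prod>r<j. f r t) has_real_derivative (\<Sum>r<j. \<Prod>r'<j. (if r' = r then f' r' else f r' \<tau>))) (at \<tau>)"
  using assms
proof (induction j)
  case 0 then show ?case by simp
next
  case (Suc j)
  have IH: "((\<lambda>t. \<Prod>r<j. f r t) has_real_derivative (\<Sum>r<j. \<Prod>r'<j. (if r' = r then f' r' else f r' \<tau>))) (at \<tau>)"
    using Suc by simp
  have fj: "(f j has_real_derivative f' j) (at \<tau>)" using Suc.prems by simp
  have "((\<lambda>t. (\<Prod>r<j. f r t) * f j t) has_real_derivative
     (\<Prod>r<j. f r \<tau>) * f' j + (\<Sum>r<j. \<Prod>r'<j. (if r' = r then f' r' else f r' \<tau>)) * f j \<tau>) (at \<tau>)"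
    by (rule DERIV_mult'[OF IH fj])
  moreover have "(\<Sum>r<Suc j. \<Prod>r'<Suc j. (if r' = r then f' r' else f r' \<tau>))
      = (\<Prod>r<j. f r \<tau>) * f' j + (\<Sum>r<j. \<Prod>r'<j. (if r' = r then f' r' else f r' \<tau>)) * f j \<tau>"
  proof -
    have a: "(\<Prod>r'<Suc j. (if r' = r then f' r' else f r' \<tau>)) = (\<Prod>r'<j. (if r' = r then f' r' else f r' \<tau>)) * f j \<tau>"
      if "r < j" for r using that by simp
    have b: "(\<Prod>r'<j. (if r' = j then f' r' else f r' \<tau>)) = (\<Prod>r'<j. f r' \<tau>)"
      by (rule prod.cong) auto
    show ?thesis by (simp add: a b sum_distrib_right)
  qed
  ultimately show ?case by (simp add: add.commute)
qed

lemma bl_mat: "bounded_linear (\<lambda>A::real^'m^'n. A *v x)"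
proof -
  have "linear (\<lambda>A::real^'m^'n. A *v x)"
    by (rule linearI) (simp_all add: matrix_vector_mult_add_rdistrib scaleR_matrix_vector_assoc)
  then show ?thesis by (simp add: linear_conv_bounded_linear)
qed

lemma mat_norm_nonneg: "0 \<le> mat_norm M"
  unfolding mat_norm_def by (rule onorm_pos_le) simp

lemma mat_norm_add: "mat_norm (A + B) \<le> mat_norm A + mat_norm B"
  unfolding mat_norm_def matrix_vector_mult_add_rdistrib by (rule onorm_triangle) simp_all

lemma mat_norm_scaleR: "mat_norm (c *\<^sub>R A) = \<bar>c\<bar> * mat_norm A"
proof -
  have "(\<lambda>x. (c *\<^sub>R A) *v x) = (\<lambda>x. c *\<^sub>R (A *v x))" by (simp add: scaleR_matrix_vector_assoc)
  then show ?thesis unfolding mat_norm_def by (simp add: onorm_scaleR)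
qed

lemma mat_norm_sum: "mat_norm (\<Sum>i\<in>S. f i) \<le> (\<Sum>i\<in>S. mat_norm (f i))"
proof (induction S rule: infinite_finite_induct)
  case (infinite A) then show ?case by (simp add: mat_norm_def onorm_zero)
next
  case empty then show ?case by (simp add: mat_norm_def onorm_zero)
next
  case (insert x F)
  then show ?case using mat_norm_add[of "f x" "sum f F"] by simp
qed

lemma mat_norm_mult: "norm (A *v x) \<le> mat_norm A * norm x"
  unfolding mat_norm_def by (rule onorm) simp

lemma mvt_mat:
  fixes \<phi> :: "real \<Rightarrow> real^'m^'m"
  assumes d: "\<And>s. s \<in> {0..1} \<Longrightarrow> (\<phi> has_vector_derivative \<phi>' s) (at s)"
    and B: "\<And>s. s \<in> {0..1} \<Longrightarrow> mat_norm (\<phi>' s) \<le> M"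
  shows "mat_norm (\<phi> 1 - \<phi> 0) \<le> M"
  unfolding mat_norm_def
proof (rule onorm_le)
  fix x :: "real^'m"
  have "norm ((\<lambda>s. \<phi> s *v x) 1 - (\<lambda>s. \<phi> s *v x) 0) \<le> (M * norm x) * (1 - 0)"
  proof (rule mvt_vd)
    fix s :: real assume s: "s \<in> {0..1}"
    show "((\<lambda>s. \<phi> s *v x) has_vector_derivative \<phi>' s *v x) (at s)"
      by (rule bounded_linear.has_vector_derivative[OF bl_mat d[OF s]])
    show "norm (\<phi>' s *v x) \<le> M * norm x"
      using mat_norm_mult[of "\<phi>' s" x] B[OF s] by (meson mult_right_mono norm_ge_zero order_trans)
  qed simp
  then show "norm ((\<phi> 1 - \<phi> 0) *v x) \<le> M * norm x" by (simp add: matrix_vector_mult_diff_rdistrib)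
qed

lemma prod_diff_le:
  fixes \<alpha> \<gamma> \<beta> :: "nat \<Rightarrow> real"
  assumes "\<And>r. r < j \<Longrightarrow> \<bar>\<alpha> r\<bar> \<le> \<beta> r" "\<And>r. r < j \<Longrightarrow> \<bar>\<gamma> r\<bar> \<le> \<beta> r"
    "\<And>r. r < j \<Longrightarrow> \<bar>\<alpha> r - \<gamma> r\<bar> \<le> h * \<beta> r" "0 \<le> h"
  shows "\<bar>(\<Prod>r<j. \<alpha> r) - (\<Prod>r<j. \<gamma> r)\<bar> \<le> real j * h * (\<Prod>r<j. \<beta> r)"
  using assms(1-3)
proof (induction j)
  case 0 then show ?case by simp
next
  case (Suc j)
  have IH: "\<bar>(\<Prod>r<j. \<alpha> r) - (\<Prod>r<j. \<gamma> r)\<bar> \<le> real j * h * (\<Prod>r<j. \<beta> r)" using Suc by simp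
  have \<beta>0: "0 \<le> \<beta> r" if "r < Suc j" for r using Suc.prems(1)[OF that] by linarith
  have P\<gamma>: "\<bar>\<Prod>r<j. \<gamma> r\<bar> \<le> (\<Prod>r<j. \<beta> r)"
    unfolding abs_prod by (rule prod_mono) (use Suc.prems in auto)
  have Pb: "0 \<le> (\<Prod>r<j. \<beta> r)" by (rule prod_nonneg) (use \<beta>0 in auto)
  have "(\<Prod>r<Suc j. \<alpha> r) - (\<Prod>r<Suc j. \<gamma> r) = ((\<Prod>r<j. \<alpha> r) - (\<Prod>r<j. \<gamma> r)) * \<alpha> j + (\<Prod>r<j. \<gamma> r) * (\<alpha> j - \<gamma> j)"
    by (simp add: algebra_simps)
  then have "\<bar>(\<Prod>r<Suc j. \<alpha> r) - (\<Prod>r<Suc j. \<gamma> r)\<bar> \<le> \<bar>(\<Prod>r<j. \<alpha> r) - (\<Prod>r<j. \<gamma> r)\<bar> * \<bar>\<alpha> j\<bar> + \<bar>\<Prod>r<j. \<gamma> r\<bar> * \<bar>\<alpha> j - \<gamma> j\<bar>"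
    by (metis abs_mult abs_triangle_ineq)
  also have "\<dots> \<le> (real j * h * (\<Prod>r<j. \<beta> r)) * \<beta> j + (\<Prod>r<j. \<beta> r) * (h * \<beta> j)"
    using IH P\<gamma> Suc.prems Pb assms(4) \<beta>0
    by (intro add_mono mult_mono) auto
  also have "\<dots> = real (Suc j) * h * (\<Prod>r<Suc j. \<beta> r)" by (simp add: algebra_simps)
  finally show ?case .
qed

lemma lists_Suc_eq: "{is::'a list. length is = Suc j} = (\<lambda>(i, is). i # is) ` (UNIV \<times> {is. length is = j})"
  by (auto simp: length_Suc_conv image_iff)

lemma sum_lists_Suc:
  fixes g :: "'m::finite list \<Rightarrow> 'b::comm_monoid_add"
  shows "(\<Sum>is\<in>{is. length is = Suc j}. g is) = (\<Sum>i\<in>UNIV. \<Sum>is\<in>{is. length is = j}. g (i # is))"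
proof -
  have fin: "finite {is::'m list. length is = j}"
    using finite_lists_length_eq[of "UNIV::'m set" j] by simp
  have inj: "inj_on (\<lambda>(i, is). i # is) (UNIV \<times> {is::'m list. length is = j})"
    by (auto simp: inj_on_def)
  have "(\<Sum>is\<in>{is. length is = Suc j}. g is) = (\<Sum>x\<in>UNIV \<times> {is. length is = j}. g (case x of (i, is) \<Rightarrow> i # is))"
    unfolding lists_Suc_eq sum.reindex[OF inj] by (simp add: o_def)
  also have "\<dots> = (\<Sum>(i, is)\<in>UNIV \<times> {is. length is = j}. g (i # is))"
    by (rule sum.cong) auto
  also have "\<dots> = (\<Sum>i\<in>UNIV. \<Sum>is\<in>{is. length is = j}. g (i # is))"
    by (rule sum.cartesian_product[symmetric])
  finally show ?thesis .
qed

lemma finite_lists: "finite {is::'m::finite list. length is = j}"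
  using finite_lists_length_eq[of "UNIV::'m set" j] by simp


definition DF :: "(real^'m \<Rightarrow> real^'m^'m) \<Rightarrow> nat \<Rightarrow> real^'m \<Rightarrow> (nat \<Rightarrow> real^'m) \<Rightarrow> real^'m^'m" where
  "DF F j u a = (\<Sum>is\<in>{is::'m list. length is = j}. (\<Prod>r<j. a r $ (is!r)) *\<^sub>R partials is F u)"

definition Psi :: "(real^'m \<Rightarrow> real^'m^'m) \<Rightarrow> nat \<Rightarrow> (nat \<Rightarrow> real \<Rightarrow> real^'m) \<Rightarrow> (nat \<Rightarrow> nat \<Rightarrow> real \<Rightarrow> real^'m) \<Rightarrow> real \<Rightarrow> real^'m^'m" where
  "Psi F j V A = (\<lambda>\<tau>. DF F j (V 0 \<tau>) (\<lambda>r. A r 0 \<tau>))"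

lemma comp_deriv:
  assumes "(f has_vector_derivative f') (at \<tau>)"
  shows "((\<lambda>t. f t $ k) has_real_derivative f' $ k) (at \<tau>)"
  unfolding has_real_derivative_iff_has_vector_derivative
  by (rule bounded_linear.has_vector_derivative[OF bounded_linear_vec_nth assms])

context adom
begin

lemma G_chain:
  assumes j: "length is < n" and V: "(Z0 has_vector_derivative Z1) (at \<tau>)"
  shows "((\<lambda>t. partials is F (Z0 t)) has_vector_derivative
     (\<Sum>i\<in>UNIV. Z1 $ i *\<^sub>R partials (i # is) F (Z0 \<tau>))) (at \<tau>)"
proof -
  have fr: "(partials is F has_derivative (\<lambda>h. \<Sum>i\<in>UNIV. h$i *\<^sub>R partials (i # is) F (Z0 \<tau>))) (at (Z0 \<tau>))"
  proof (rule frechet_partials)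
    show "((\<lambda>s. partials is F (u + s *\<^sub>R axis i 1)) has_vector_derivative partials (i # is) F u) (at 0)" for i u
      by (rule P[OF j])
    show "continuous_on UNIV (partials (i # is) F)" for i by (rule PC) (use j in auto)
  qed
  have "((partials is F) \<circ> Z0 has_derivative
      (\<lambda>h. \<Sum>i\<in>UNIV. h$i *\<^sub>R partials (i # is) F (Z0 \<tau>)) \<circ> (\<lambda>h. h *\<^sub>R Z1)) (at \<tau>)"
    by (rule diff_chain_at[OF V[unfolded has_vector_derivative_def] fr])
  moreover have "(\<lambda>h. \<Sum>i\<in>UNIV. h$i *\<^sub>R partials (i # is) F (Z0 \<tau>)) \<circ> (\<lambda>h. h *\<^sub>R Z1)
     = (\<lambda>h. h *\<^sub>R (\<Sum>i\<in>UNIV. Z1 $ i *\<^sub>R partials (i # is) F (Z0 \<tau>)))"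
    by (simp add: o_def scaleR_sum_right)
  ultimately show ?thesis by (simp add: has_vector_derivative_def o_def)
qed

lemma DPsi:
  assumes j: "j + 1 \<le> n" and V: "seqd V" and A: "\<And>r. r < j \<Longrightarrow> seqd (A r)"
  shows "(Psi F j V A has_vector_derivative
     (Psi F (Suc j) V (shc (V \<circ> Suc) A) \<tau> + (\<Sum>r<j. Psi F j V (A(r := A r \<circ> Suc)) \<tau>))) (at \<tau>)"
proof -
  define L where "L = {is::'m list. length is = j}"
  define c where "c = (\<lambda>is t. \<Prod>r<j. A r 0 t $ (is!r))"
  define c' where "c' = (\<lambda>is. \<Sum>r<j. \<Prod>r'<j. (if r' = r then A r' 1 \<tau> $ (is!r') else A r' 0 \<tau> $ (is!r')))"
  define D where "D = (\<lambda>is. \<Sum>i\<in>UNIV. V 1 \<tau> $ i *\<^sub>R partials (i # is) F (V 0 \<tau>))"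
  have dc: "(c is has_real_derivative c' is) (at \<tau>)" for "is"
    unfolding c_def c'_def
    by (rule DERIV_prod_lessThan, rule comp_deriv) (use A in \<open>auto simp: seqd_def\<close>)
  have dG: "((\<lambda>t. partials is F (V 0 t)) has_vector_derivative D is) (at \<tau>)" if "is \<in> L" for "is"
    unfolding D_def by (rule G_chain) (use that j V in \<open>auto simp: L_def seqd_def\<close>)
  have Psi_eq: "Psi F j V A = (\<lambda>t. \<Sum>is\<in>L. c is t *\<^sub>R partials is F (V 0 t))"
    by (simp add: Psi_def DF_def L_def c_def)
  have der: "(Psi F j V A has_vector_derivative (\<Sum>is\<in>L. c is \<tau> *\<^sub>R D is + c' is *\<^sub>R partials is F (V 0 \<tau>))) (at \<tau>)"
    unfolding Psi_eq
    by (rule has_vector_derivative_sum, rule has_vector_derivative_scaleR[OF dc dG])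
  have e1: "(\<Sum>is\<in>L. c is \<tau> *\<^sub>R D is) = Psi F (Suc j) V (shc (V \<circ> Suc) A) \<tau>"
  proof -
    have "Psi F (Suc j) V (shc (V \<circ> Suc) A) \<tau> =
        (\<Sum>i\<in>UNIV. \<Sum>is\<in>L. (\<Prod>r<Suc j. shc (V \<circ> Suc) A r 0 \<tau> $ ((i # is)!r)) *\<^sub>R partials (i # is) F (V 0 \<tau>))"
      unfolding Psi_def DF_def L_def by (rule sum_lists_Suc)
    also have "\<dots> = (\<Sum>i\<in>UNIV. \<Sum>is\<in>L. (V 1 \<tau> $ i * c is \<tau>) *\<^sub>R partials (i # is) F (V 0 \<tau>))"
      by (simp del: prod.lessThan_Suc add: prod.lessThan_Suc_shift c_def)
    also have "\<dots> = (\<Sum>is\<in>L. \<Sum>i\<in>UNIV. (V 1 \<tau> $ i * c is \<tau>) *\<^sub>R partials (i # is) F (V 0 \<tau>))"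
      by (rule sum.swap)
    also have "\<dots> = (\<Sum>is\<in>L. c is \<tau> *\<^sub>R D is)"
      by (simp add: D_def scaleR_sum_right mult.commute)
    finally show ?thesis by simp
  qed
  have e2: "(\<Sum>is\<in>L. c' is *\<^sub>R partials is F (V 0 \<tau>)) = (\<Sum>r<j. Psi F j V (A(r := A r \<circ> Suc)) \<tau>)"
  proof -
    have "(\<Sum>r<j. Psi F j V (A(r := A r \<circ> Suc)) \<tau>) =
       (\<Sum>r<j. \<Sum>is\<in>L. (\<Prod>r'<j. (if r' = r then A r' 1 \<tau> $ (is!r') else A r' 0 \<tau> $ (is!r'))) *\<^sub>R partials is F (V 0 \<tau>))"
    proof (rule sum.cong[OF refl])
      fix r assume "r \<in> {..<j}"
      show "Psi F j V (A(r := A r \<circ> Suc)) \<tau> = (\<Sum>is\<in>L. (\<Prod>r'<j. (if r' = r then A r' 1 \<tau> $ (is!r') else A r' 0 \<tau> $ (is!r'))) *\<^sub>R partials is F (V 0 \<tau>))"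
        unfolding Psi_def DF_def L_def
        by (intro sum.cong refl arg_cong2[where f=scaleR] prod.cong) auto
    qed
    also have "\<dots> = (\<Sum>is\<in>L. \<Sum>r<j. (\<Prod>r'<j. (if r' = r then A r' 1 \<tau> $ (is!r') else A r' 0 \<tau> $ (is!r'))) *\<^sub>R partials is F (V 0 \<tau>))"
      by (rule sum.swap)
    also have "\<dots> = (\<Sum>is\<in>L. c' is *\<^sub>R partials is F (V 0 \<tau>))"
      by (simp add: c'_def scaleR_sum_left)
    finally show ?thesis by simp
  qed
  have "(\<Sum>is\<in>L. c is \<tau> *\<^sub>R D is + c' is *\<^sub>R partials is F (V 0 \<tau>)) =
      Psi F (Suc j) V (shc (V \<circ> Suc) A) \<tau> + (\<Sum>r<j. Psi F j V (A(r := A r \<circ> Suc)) \<tau>)"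
    by (simp add: sum.distrib e1 e2)
  with der show ?thesis by simp
qed

end


definition psi :: "(nat \<Rightarrow> real \<Rightarrow> real) \<Rightarrow> nat \<Rightarrow> (nat \<Rightarrow> real \<Rightarrow> real) \<Rightarrow> (nat \<Rightarrow> nat \<Rightarrow> real \<Rightarrow> real) \<Rightarrow> real \<Rightarrow> real" where
  "psi Nd j X B = (\<lambda>\<tau>. Nd j (X 0 \<tau>) * (\<Prod>r<j. B r 0 \<tau>))"

definition xi :: "(nat \<Rightarrow> real \<Rightarrow> real) \<Rightarrow> nat \<Rightarrow> (nat \<Rightarrow> real \<Rightarrow> real) \<Rightarrow> (nat \<Rightarrow> nat \<Rightarrow> real \<Rightarrow> real) \<Rightarrow> real \<Rightarrow> real" where
  "xi Nd j X B = (\<lambda>\<tau>. (Nd (Suc j) (X 0 \<tau>) * X 0 \<tau> + real j * Nd j (X 0 \<tau>)) * (\<Prod>r<j. B r 0 \<tau>))"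

lemma Cs_step:
  fixes f :: "real \<Rightarrow> 'a::real_normed_vector"
  assumes "Cs l fN fsN" "\<And>r. r < j \<Longrightarrow> Cs l (fR r) (fsR r)"
    "\<And>\<tau>. (f has_vector_derivative (fN \<tau> + (\<Sum>r<j. fR r \<tau>))) (at \<tau>)"
  shows "Cs (Suc l) f (\<lambda>p. if p = 0 then f else (\<lambda>t. fsN (p-1) t + (\<Sum>r<j. fsR r (p-1) t)))"
  unfolding Cs_def
proof (intro conjI allI impI)
  fix p \<tau> assume p: "p < Suc l"
  show "((if p = 0 then f else (\<lambda>t. fsN (p-1) t + (\<Sum>r<j. fsR r (p-1) t))) has_vector_derivative
     (if Suc p = 0 then f else (\<lambda>t. fsN (Suc p - 1) t + (\<Sum>r<j. fsR r (Suc p - 1) t))) \<tau>) (at \<tau>)"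
  proof (cases p)
    case 0
    have "fN = fsN 0" "\<And>r. r < j \<Longrightarrow> fR r = fsR r 0" using assms(1,2) by (auto simp: Cs_def)
    then show ?thesis using 0 assms(3)[of \<tau>] by simp
  next
    case (Suc q)
    with p have q: "q < l" by simp
    have "((\<lambda>t. fsN q t + (\<Sum>r<j. fsR r q t)) has_vector_derivative (fsN (Suc q) \<tau> + (\<Sum>r<j. fsR r (Suc q) \<tau>))) (at \<tau>)"
      using assms(1,2) q by (intro has_vector_derivative_add has_vector_derivative_sum) (auto simp: Cs_def)
    then show ?thesis using Suc by simp
  qed
qed simp

context adom
begin

lemma Dpsi:
  assumes j: "j < n" and X: "seqd X" and B: "\<And>r. r < j \<Longrightarrow> seqd (B r)"
  shows "(psi Nd j X B has_vector_derivative
     (psi Nd (Suc j) X (shc (X \<circ> Suc) B) \<tau> + (\<Sum>r<j. psi Nd j X (B(r := B r \<circ> Suc)) \<tau>))) (at \<tau>)"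
proof -
  have dX: "(X 0 has_real_derivative X 1 \<tau>) (at \<tau>)"
    using X by (simp add: seqd_def has_real_derivative_iff_has_vector_derivative)
  have dN: "((\<lambda>t. Nd j (X 0 t)) has_real_derivative Nd (Suc j) (X 0 \<tau>) * X 1 \<tau>) (at \<tau>)"
    by (rule DERIV_chain2[OF ND[OF j] dX])
  have dP: "((\<lambda>t. \<Prod>r<j. B r 0 t) has_real_derivative (\<Sum>r<j. \<Prod>r'<j. (if r' = r then B r' 1 \<tau> else B r' 0 \<tau>))) (at \<tau>)"
    by (rule DERIV_prod_lessThan) (use B in \<open>auto simp: seqd_def has_real_derivative_iff_has_vector_derivative\<close>)
  have d: "(psi Nd j X B has_real_derivative
      Nd j (X 0 \<tau>) * (\<Sum>r<j. \<Prod>r'<j. (if r' = r then B r' 1 \<tau> else B r' 0 \<tau>)) + Nd (Suc j) (X 0 \<tau>) * X 1 \<tau> * (\<Prod>r<j. B r 0 \<tau>)) (at \<tau>)"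
    unfolding psi_def by (rule DERIV_mult'[OF dN dP])
  have e1: "psi Nd (Suc j) X (shc (X \<circ> Suc) B) \<tau> = Nd (Suc j) (X 0 \<tau>) * X 1 \<tau> * (\<Prod>r<j. B r 0 \<tau>)"
    unfolding psi_def by (simp del: prod.lessThan_Suc add: prod.lessThan_Suc_shift)
  have e2: "psi Nd j X (B(r := B r \<circ> Suc)) \<tau> = Nd j (X 0 \<tau>) * (\<Prod>r'<j. (if r' = r then B r' 1 \<tau> else B r' 0 \<tau>))" for r
    unfolding psi_def by (intro arg_cong2[where f="(*)"] refl prod.cong) auto
  show ?thesis using d unfolding has_real_derivative_iff_has_vector_derivative e1 e2
    by (simp add: sum_distrib_left add.commute)
qed

lemma Dxi:
  assumes j: "j + 1 < n" and X: "seqd X" and B: "\<And>r. r < j \<Longrightarrow> seqd (B r)"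
  shows "(xi Nd j X B has_vector_derivative
     (xi Nd (Suc j) X (shc (X \<circ> Suc) B) \<tau> + (\<Sum>r<j. xi Nd j X (B(r := B r \<circ> Suc)) \<tau>))) (at \<tau>)"
proof -
  have dX: "(X 0 has_real_derivative X 1 \<tau>) (at \<tau>)"
    using X by (simp add: seqd_def has_real_derivative_iff_has_vector_derivative)
  have dN: "((\<lambda>t. Nd j (X 0 t)) has_real_derivative Nd (Suc j) (X 0 \<tau>) * X 1 \<tau>) (at \<tau>)"
    by (rule DERIV_chain2[OF ND dX]) (use j in simp)
  have dN1: "((\<lambda>t. Nd (Suc j) (X 0 t)) has_real_derivative Nd (Suc (Suc j)) (X 0 \<tau>) * X 1 \<tau>) (at \<tau>)"
    by (rule DERIV_chain2[OF ND dX]) (use j in simp)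
  define E' where "E' = (Nd (Suc (Suc j)) (X 0 \<tau>) * X 1 \<tau>) * X 0 \<tau> + Nd (Suc j) (X 0 \<tau>) * X 1 \<tau> + real j * (Nd (Suc j) (X 0 \<tau>) * X 1 \<tau>)"
  have dE: "((\<lambda>t. Nd (Suc j) (X 0 t) * X 0 t + real j * Nd j (X 0 t)) has_real_derivative E') (at \<tau>)"
    unfolding E'_def by (rule derivative_eq_intros dN dN1 dX refl | simp)+
  have dP: "((\<lambda>t. \<Prod>r<j. B r 0 t) has_real_derivative (\<Sum>r<j. \<Prod>r'<j. (if r' = r then B r' 1 \<tau> else B r' 0 \<tau>))) (at \<tau>)"
    by (rule DERIV_prod_lessThan) (use B in \<open>auto simp: seqd_def has_real_derivative_iff_has_vector_derivative\<close>)
  have d: "(xi Nd j X B has_real_derivative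
      (Nd (Suc j) (X 0 \<tau>) * X 0 \<tau> + real j * Nd j (X 0 \<tau>)) * (\<Sum>r<j. \<Prod>r'<j. (if r' = r then B r' 1 \<tau> else B r' 0 \<tau>)) + E' * (\<Prod>r<j. B r 0 \<tau>)) (at \<tau>)"
    unfolding xi_def by (rule DERIV_mult'[OF dE dP])
  have e1: "xi Nd (Suc j) X (shc (X \<circ> Suc) B) \<tau> = (Nd (Suc (Suc j)) (X 0 \<tau>) * X 0 \<tau> + real (Suc j) * Nd (Suc j) (X 0 \<tau>)) * (X 1 \<tau> * (\<Prod>r<j. B r 0 \<tau>))"
    unfolding xi_def by (simp del: prod.lessThan_Suc of_nat_Suc add: prod.lessThan_Suc_shift)
  have e2: "xi Nd j X (B(r := B r \<circ> Suc)) \<tau> = (Nd (Suc j) (X 0 \<tau>) * X 0 \<tau> + real j * Nd j (X 0 \<tau>)) * (\<Prod>r'<j. (if r' = r then B r' 1 \<tau> else B r' 0 \<tau>))" for r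
    unfolding xi_def by (intro arg_cong2[where f="(*)"] refl prod.cong) auto
  have eq: "(Nd (Suc j) (X 0 \<tau>) * X 0 \<tau> + real j * Nd j (X 0 \<tau>)) * (\<Sum>r<j. \<Prod>r'<j. (if r' = r then B r' 1 \<tau> else B r' 0 \<tau>)) + E' * (\<Prod>r<j. B r 0 \<tau>)
     = xi Nd (Suc j) X (shc (X \<circ> Suc) B) \<tau> + (\<Sum>r<j. xi Nd j X (B(r := B r \<circ> Suc)) \<tau>)"
    unfolding e1 e2 E'_def by (simp add: sum_distrib_left algebra_simps)
  show ?thesis using d unfolding has_real_derivative_iff_has_vector_derivative eq .
qed

end


lemma DF_zero:
  assumes "r < j" "a r = 0"
  shows "DF F j u a = 0"
  unfolding DF_def
proof (rule sum.neutral, intro ballI)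
  fix "is"
  have "(\<Prod>r<j. a r $ (is!r)) = 0" using assms by (intro prod_zero) (auto intro!: bexI[of _ r])
  then show "(\<Prod>r<j. a r $ (is!r)) *\<^sub>R partials is F u = 0" by simp
qed

context adom
begin

lemma Nd_mono:
  assumes j: "j < n" and "0 \<le> x" "x \<le> y"
  shows "Nd j x \<le> Nd j y"
proof (rule DERIV_nonneg_imp_nondecreasing[OF assms(3)])
  fix z assume "x \<le> z" "z \<le> y"
  then show "\<exists>d. (Nd j has_real_derivative d) (at z) \<and> 0 \<le> d"
    using ND[OF j, of z] NN[of "Suc j" z] j assms(2) by auto
qed

lemma BA:
  assumes j: "j < n" and u: "norm u \<le> x" and ab: "\<And>r. r < j \<Longrightarrow> norm (a r) \<le> b r"
  shows "mat_norm (DF F j u a) \<le> Nd j x * (\<Prod>r<j. b r)"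
proof -
  define L where "L = {is::'m list. length is = j}"
  have b0: "0 \<le> (\<Prod>r<j. b r)" proof (rule prod_nonneg)
    fix r assume "r \<in> {..<j}"
    then have "norm (a r) \<le> b r" using ab by simp
    then show "0 \<le> b r" by (meson norm_ge_zero order_trans)
  qed
  have "mat_norm (DF F j u a) \<le> (\<Sum>is\<in>L. mat_norm ((\<Prod>r<j. a r $ (is!r)) *\<^sub>R partials is F u))"
    unfolding DF_def L_def by (rule mat_norm_sum)
  also have "\<dots> \<le> (\<Sum>is\<in>L. (\<Prod>r<j. b r) * mat_norm (partials is F u))"
  proof (rule sum_mono)
    fix "is" assume "is \<in> L"
    have "\<bar>\<Prod>r<j. a r $ (is!r)\<bar> \<le> (\<Prod>r<j. b r)"
      unfolding abs_prod
    proof (rule prod_mono)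
      fix r assume "r \<in> {..<j}"
      then show "0 \<le> \<bar>a r $ (is!r)\<bar> \<and> \<bar>a r $ (is!r)\<bar> \<le> b r"
        using ab[of r] component_le_norm_cart[of "a r" "is!r"] by simp
    qed
    then show "mat_norm ((\<Prod>r<j. a r $ (is!r)) *\<^sub>R partials is F u) \<le> (\<Prod>r<j. b r) * mat_norm (partials is F u)"
      unfolding mat_norm_scaleR by (rule mult_right_mono) (rule mat_norm_nonneg)
  qed
  also have "\<dots> = (\<Prod>r<j. b r) * (\<Sum>is\<in>L. mat_norm (partials is F u))" by (simp add: sum_distrib_left)
  also have "\<dots> \<le> (\<Prod>r<j. b r) * Nd j (norm u)"
    using TB[of j u] j b0 unfolding L_def by (intro mult_left_mono) auto
  also have "\<dots> \<le> (\<Prod>r<j. b r) * Nd j x"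
    using Nd_mono[OF j norm_ge_zero u] b0 by (rule mult_left_mono)
  finally show ?thesis by (simp add: mult.commute)
qed

lemma BD:
  assumes j: "j + 2 \<le> n" and h: "0 \<le> h"
    and v: "norm v \<le> x" and w: "norm w \<le> x" and vw: "norm (v - w) \<le> h * x"
    and ab: "\<And>r. r < j \<Longrightarrow> norm (a r) \<le> b r" and cb: "\<And>r. r < j \<Longrightarrow> norm (c r) \<le> b r"
    and acb: "\<And>r. r < j \<Longrightarrow> norm (a r - c r) \<le> h * b r"
  shows "mat_norm (DF F j v a - DF F j w c) \<le> h * ((Nd (Suc j) x * x + real j * Nd j x) * (\<Prod>r<j. b r))"
proof -
  have b0: "0 \<le> (\<Prod>r<j. b r)" proof (rule prod_nonneg)
    fix r assume "r \<in> {..<j}"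
    then have "norm (a r) \<le> b r" using ab by simp
    then show "0 \<le> b r" by (meson norm_ge_zero order_trans)
  qed
  define V where "V = (\<lambda>(p::nat) (t::real). if p = 0 then w + t *\<^sub>R (v - w) else if p = 1 then v - w else (0::real^'m))"
  define A where "A = (\<lambda>(r::nat) (p::nat) (t::real). if p = 0 then a r else (0::real^'m))"
  have sV: "seqd V" unfolding seqd_def
  proof (intro allI)
    fix p \<tau> show "(V p has_vector_derivative V (Suc p) \<tau>) (at \<tau>)"
    proof (cases "p = 0")
      case True then show ?thesis unfolding V_def by (auto intro!: derivative_eq_intros)
    next
      case False then show ?thesis unfolding V_def by auto
    qed
  qed
  have sA: "seqd (A r)" for r unfolding seqd_def A_def by auto
  have i: "mat_norm (DF F j v a - DF F j w a) \<le> Nd (Suc j) x * (h * x * (\<Prod>r<j. b r))"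
  proof -
    have "mat_norm (Psi F j V A 1 - Psi F j V A 0) \<le> Nd (Suc j) x * (\<Prod>r<Suc j. shc (h * x) b r)"
    proof (rule mvt_mat)
      fix s :: real assume s: "s \<in> {0..1}"
      show "(Psi F j V A has_vector_derivative
        (Psi F (Suc j) V (shc (V \<circ> Suc) A) s + (\<Sum>r<j. Psi F j V (A(r := A r \<circ> Suc)) s))) (at s)"
        by (rule DPsi) (use j sV sA in auto)
      have z: "Psi F j V (A(r := A r \<circ> Suc)) s = 0" if "r < j" for r
        unfolding Psi_def by (rule DF_zero[OF that]) (simp add: A_def)
      have e: "Psi F (Suc j) V (shc (V \<circ> Suc) A) s = DF F (Suc j) (w + s *\<^sub>R (v - w)) (shc (v - w) a)"
      proof -
        have "(\<lambda>r. shc (V \<circ> Suc) A r 0 s) = shc (v - w) a"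
          by (rule ext, case_tac r) (auto simp: V_def A_def)
        then show ?thesis unfolding Psi_def by (simp add: V_def)
      qed
      have pt: "norm (w + s *\<^sub>R (v - w)) \<le> x"
      proof -
        have "w + s *\<^sub>R (v - w) = (1 - s) *\<^sub>R w + s *\<^sub>R v" by (simp add: algebra_simps)
        then have "norm (w + s *\<^sub>R (v - w)) \<le> (1 - s) * norm w + s * norm v"
          using s by (metis abs_of_nonneg atLeastAtMost_iff diff_ge_0_iff_ge norm_scaleR norm_triangle_ineq)
        also have "\<dots> \<le> (1 - s) * x + s * x" using s v w by (intro add_mono mult_left_mono) auto
        finally show ?thesis by (simp add: algebra_simps)
      qed
      have "mat_norm (DF F (Suc j) (w + s *\<^sub>R (v - w)) (shc (v - w) a)) \<le> Nd (Suc j) x * (\<Prod>r<Suc j. shc (h * x) b r)"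
      proof (rule BA)
        show "Suc j < n" using j by simp
        show "norm (shc (v - w) a r) \<le> shc (h * x) b r" if "r < Suc j" for r
          using that vw ab by (cases r) auto
      qed (rule pt)
      then show "mat_norm (Psi F (Suc j) V (shc (V \<circ> Suc) A) s + (\<Sum>r<j. Psi F j V (A(r := A r \<circ> Suc)) s))
          \<le> Nd (Suc j) x * (\<Prod>r<Suc j. shc (h * x) b r)"
        using z e by simp
    qed
    moreover have "Psi F j V A 1 = DF F j v a" "Psi F j V A 0 = DF F j w a"
      unfolding Psi_def V_def A_def by simp_all
    moreover have "(\<Prod>r<Suc j. shc (h * x) b r) = h * x * (\<Prod>r<j. b r)"
      by (simp del: prod.lessThan_Suc add: prod.lessThan_Suc_shift)
    ultimately show ?thesis by simp
  qed
  have ii: "mat_norm (DF F j w a - DF F j w c) \<le> real j * h * (\<Prod>r<j. b r) * Nd j x"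
  proof -
    define L where "L = {is::'m list. length is = j}"
    have "DF F j w a - DF F j w c = (\<Sum>is\<in>L. ((\<Prod>r<j. a r $ (is!r)) - (\<Prod>r<j. c r $ (is!r))) *\<^sub>R partials is F w)"
      unfolding DF_def L_def by (simp add: sum_subtractf scaleR_diff_left)
    then have "mat_norm (DF F j w a - DF F j w c) \<le> (\<Sum>is\<in>L. mat_norm (((\<Prod>r<j. a r $ (is!r)) - (\<Prod>r<j. c r $ (is!r))) *\<^sub>R partials is F w))"
      using mat_norm_sum by simp
    also have "\<dots> \<le> (\<Sum>is\<in>L. (real j * h * (\<Prod>r<j. b r)) * mat_norm (partials is F w))"
    proof (rule sum_mono)
      fix "is" assume "is \<in> L"
      have "\<bar>(\<Prod>r<j. a r $ (is!r)) - (\<Prod>r<j. c r $ (is!r))\<bar> \<le> real j * h * (\<Prod>r<j. b r)"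
      proof (rule prod_diff_le[OF _ _ _ h])
        show "\<bar>a r $ (is!r)\<bar> \<le> b r" if "r < j" for r using ab[OF that] component_le_norm_cart[of "a r" "is!r"] by simp
        show "\<bar>c r $ (is!r)\<bar> \<le> b r" if "r < j" for r using cb[OF that] component_le_norm_cart[of "c r" "is!r"] by simp
        show "\<bar>a r $ (is!r) - c r $ (is!r)\<bar> \<le> h * b r" if "r < j" for r
          using acb[OF that] component_le_norm_cart[of "a r - c r" "is!r"] by simp
      qed
      then show "mat_norm (((\<Prod>r<j. a r $ (is!r)) - (\<Prod>r<j. c r $ (is!r))) *\<^sub>R partials is F w) \<le> (real j * h * (\<Prod>r<j. b r)) * mat_norm (partials is F w)"
        unfolding mat_norm_scaleR by (rule mult_right_mono) (rule mat_norm_nonneg)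
    qed
    also have "\<dots> = (real j * h * (\<Prod>r<j. b r)) * (\<Sum>is\<in>L. mat_norm (partials is F w))" by (simp add: sum_distrib_left)
    also have "\<dots> \<le> (real j * h * (\<Prod>r<j. b r)) * Nd j (norm w)"
      using TB[of j w] j b0 h unfolding L_def by (intro mult_left_mono) auto
    also have "\<dots> \<le> (real j * h * (\<Prod>r<j. b r)) * Nd j x"
      using Nd_mono[OF _ norm_ge_zero w] j b0 h by (intro mult_left_mono) auto
    finally show ?thesis .
  qed
  have "mat_norm (DF F j v a - DF F j w c) \<le> mat_norm (DF F j v a - DF F j w a) + mat_norm (DF F j w a - DF F j w c)"
    using mat_norm_add[of "DF F j v a - DF F j w a" "DF F j w a - DF F j w c"] by simp
  also have "\<dots> \<le> Nd (Suc j) x * (h * x * (\<Prod>r<j. b r)) + real j * h * (\<Prod>r<j. b r) * Nd j x"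
    using i ii by simp
  also have "\<dots> = h * ((Nd (Suc j) x * x + real j * Nd j x) * (\<Prod>r<j. b r))" by (simp add: algebra_simps)
  finally show ?thesis .
qed

end


declare [[unify_search_bound = 200]]

context adom
begin

lemma claimA:
  "j + l < n \<Longrightarrow> seqd V \<Longrightarrow> (\<forall>r<j. seqd (A r)) \<Longrightarrow> seqd X \<Longrightarrow> (\<forall>r<j. seqd (B r)) \<Longrightarrow>
   (\<forall>p\<le>l. norm (V p 0) \<le> X p 0) \<Longrightarrow> (\<forall>r<j. \<forall>p\<le>l. norm (A r p 0) \<le> B r p 0) \<Longrightarrow>
   \<exists>Ps Qs. Cs l (Psi F j V A) Ps \<and> Cs l (psi Nd j X B) Qs \<and> (\<forall>p\<le>l. mat_norm (Ps p 0) \<le> Qs p 0)"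
proof (induction l arbitrary: j V A X B)
  case 0
  have "mat_norm (Psi F j V A 0) \<le> psi Nd j X B 0"
    unfolding Psi_def psi_def by (rule BA) (use 0 in auto)
  then show ?case by (intro exI[of _ "\<lambda>_. Psi F j V A"] exI[of _ "\<lambda>_. psi Nd j X B"]) (simp add: Cs_def)
next
  case (Suc l)
  have base: "mat_norm (Psi F j V A 0) \<le> psi Nd j X B 0"
    unfolding Psi_def psi_def by (rule BA) (use Suc.prems in auto)
  obtain PsN QsN where N: "Cs l (Psi F (Suc j) V (shc (V \<circ> Suc) A)) PsN" "Cs l (psi Nd (Suc j) X (shc (X \<circ> Suc) B)) QsN"
      "\<forall>p\<le>l. mat_norm (PsN p 0) \<le> QsN p 0"
  proof -
    have "\<exists>Ps Qs. Cs l (Psi F (Suc j) V (shc (V \<circ> Suc) A)) Ps \<and> Cs l (psi Nd (Suc j) X (shc (X \<circ> Suc) B)) Qs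
        \<and> (\<forall>p\<le>l. mat_norm (Ps p 0) \<le> Qs p 0)"
    proof (rule Suc.IH)
      show "Suc j + l < n" using Suc.prems by simp
      show "seqd V" "seqd X" using Suc.prems by auto
      show "\<forall>r<Suc j. seqd (shc (V \<circ> Suc) A r)" using Suc.prems by (auto simp: less_Suc_eq_0_disj seqd_Suc)
      show "\<forall>r<Suc j. seqd (shc (X \<circ> Suc) B r)" using Suc.prems by (auto simp: less_Suc_eq_0_disj seqd_Suc)
      show "\<forall>p\<le>l. norm (V p 0) \<le> X p 0" using Suc.prems by auto
      show "\<forall>r<Suc j. \<forall>p\<le>l. norm (shc (V \<circ> Suc) A r p 0) \<le> shc (X \<circ> Suc) B r p 0"
        using Suc.prems by (auto simp: less_Suc_eq_0_disj)
    qed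
    then show ?thesis using that by blast
  qed
  have "\<forall>r. \<exists>PQ. r < j \<longrightarrow> Cs l (Psi F j V (A(r := A r \<circ> Suc))) (fst PQ) \<and> Cs l (psi Nd j X (B(r := B r \<circ> Suc))) (snd PQ)
        \<and> (\<forall>p\<le>l. mat_norm (fst PQ p 0) \<le> snd PQ p 0)"
  proof (intro allI)
    fix r
    show "\<exists>PQ. r < j \<longrightarrow> Cs l (Psi F j V (A(r := A r \<circ> Suc))) (fst PQ) \<and> Cs l (psi Nd j X (B(r := B r \<circ> Suc))) (snd PQ)
        \<and> (\<forall>p\<le>l. mat_norm (fst PQ p 0) \<le> snd PQ p 0)"
    proof (cases "r < j")
      case True
      have "\<exists>Ps Qs. Cs l (Psi F j V (A(r := A r \<circ> Suc))) Ps \<and> Cs l (psi Nd j X (B(r := B r \<circ> Suc))) Qs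
        \<and> (\<forall>p\<le>l. mat_norm (Ps p 0) \<le> Qs p 0)"
      proof (rule Suc.IH)
        show "j + l < n" using Suc.prems by simp
        show "seqd V" "seqd X" using Suc.prems by auto
        show "\<forall>r'<j. seqd ((A(r := A r \<circ> Suc)) r')" using Suc.prems by (auto simp: seqd_Suc)
        show "\<forall>r'<j. seqd ((B(r := B r \<circ> Suc)) r')" using Suc.prems by (auto simp: seqd_Suc)
        show "\<forall>p\<le>l. norm (V p 0) \<le> X p 0" using Suc.prems by auto
        show "\<forall>r'<j. \<forall>p\<le>l. norm ((A(r := A r \<circ> Suc)) r' p 0) \<le> (B(r := B r \<circ> Suc)) r' p 0"
          using Suc.prems by auto
      qed
      then show ?thesis by (metis fst_conv snd_conv)
    qed simp
  qed
  then obtain PQ where PQ: "\<And>r. r < j \<Longrightarrow> Cs l (Psi F j V (A(r := A r \<circ> Suc))) (fst (PQ r)) \<and> Cs l (psi Nd j X (B(r := B r \<circ> Suc))) (snd (PQ r))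
        \<and> (\<forall>p\<le>l. mat_norm (fst (PQ r) p 0) \<le> snd (PQ r) p 0)"
    by metis
  define Ps where "Ps = (\<lambda>p. if p = 0 then Psi F j V A else (\<lambda>t. PsN (p-1) t + (\<Sum>r<j. fst (PQ r) (p-1) t)))"
  define Qs where "Qs = (\<lambda>p. if p = 0 then psi Nd j X B else (\<lambda>t. QsN (p-1) t + (\<Sum>r<j. snd (PQ r) (p-1) t)))"
  have C1: "Cs (Suc l) (Psi F j V A) Ps"
    unfolding Ps_def by (rule Cs_step[OF N(1)]) (use PQ Suc.prems in \<open>auto intro!: DPsi\<close>)
  have C2: "Cs (Suc l) (psi Nd j X B) Qs"
    unfolding Qs_def by (rule Cs_step[OF N(2)]) (use PQ Suc.prems in \<open>auto intro!: Dpsi\<close>)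
  have bd: "mat_norm (Ps p 0) \<le> Qs p 0" if p: "p \<le> Suc l" for p
  proof (cases p)
    case 0 then show ?thesis using base by (simp add: Ps_def Qs_def)
  next
    case (Suc q)
    with p have q: "q \<le> l" by simp
    have "mat_norm (PsN q 0 + (\<Sum>r<j. fst (PQ r) q 0)) \<le> mat_norm (PsN q 0) + (\<Sum>r<j. mat_norm (fst (PQ r) q 0))"
      using mat_norm_add[of "PsN q 0" "\<Sum>r<j. fst (PQ r) q 0"] mat_norm_sum[of "\<lambda>r. fst (PQ r) q 0" "{..<j}"] by linarith
    also have "\<dots> \<le> QsN q 0 + (\<Sum>r<j. snd (PQ r) q 0)"
      using N(3) PQ q by (intro add_mono sum_mono) auto
    finally show ?thesis using Suc by (simp add: Ps_def Qs_def)
  qed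
  show ?case using C1 C2 bd by blast
qed

lemma claimD:
  "j + l + 2 \<le> n \<Longrightarrow> 0 \<le> h \<Longrightarrow> seqd V \<Longrightarrow> seqd W \<Longrightarrow> (\<forall>r<j. seqd (A r)) \<Longrightarrow> (\<forall>r<j. seqd (Cc r)) \<Longrightarrow>
   seqd X \<Longrightarrow> (\<forall>r<j. seqd (B r)) \<Longrightarrow>
   (\<forall>p\<le>l. norm (V p 0) \<le> X p 0 \<and> norm (W p 0) \<le> X p 0 \<and> norm (V p 0 - W p 0) \<le> h * X p 0) \<Longrightarrow>
   (\<forall>r<j. \<forall>p\<le>l. norm (A r p 0) \<le> B r p 0 \<and> norm (Cc r p 0) \<le> B r p 0 \<and> norm (A r p 0 - Cc r p 0) \<le> h * B r p 0) \<Longrightarrow>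
   \<exists>Ps Rs Qs. Cs l (Psi F j V A) Ps \<and> Cs l (Psi F j W Cc) Rs \<and> Cs l (xi Nd j X B) Qs \<and>
      (\<forall>p\<le>l. mat_norm (Ps p 0 - Rs p 0) \<le> h * Qs p 0)"
proof (induction l arbitrary: j V W A Cc X B)
  case 0
  have "mat_norm (Psi F j V A 0 - Psi F j W Cc 0) \<le> h * xi Nd j X B 0"
    unfolding Psi_def xi_def by (rule BD) (use 0 in auto)
  then show ?case
    by (intro exI[of _ "\<lambda>_. Psi F j V A"] exI[of _ "\<lambda>_. Psi F j W Cc"] exI[of _ "\<lambda>_. xi Nd j X B"]) (simp add: Cs_def)
next
  case (Suc l)
  have base: "mat_norm (Psi F j V A 0 - Psi F j W Cc 0) \<le> h * xi Nd j X B 0"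
    unfolding Psi_def xi_def by (rule BD) (use Suc.prems in auto)
  obtain PsN RsN QsN where N: "Cs l (Psi F (Suc j) V (shc (V \<circ> Suc) A)) PsN" "Cs l (Psi F (Suc j) W (shc (W \<circ> Suc) Cc)) RsN"
      "Cs l (xi Nd (Suc j) X (shc (X \<circ> Suc) B)) QsN"
      "\<forall>p\<le>l. mat_norm (PsN p 0 - RsN p 0) \<le> h * QsN p 0"
  proof -
    have "\<exists>Ps Rs Qs. Cs l (Psi F (Suc j) V (shc (V \<circ> Suc) A)) Ps \<and> Cs l (Psi F (Suc j) W (shc (W \<circ> Suc) Cc)) Rs \<and>
        Cs l (xi Nd (Suc j) X (shc (X \<circ> Suc) B)) Qs \<and> (\<forall>p\<le>l. mat_norm (Ps p 0 - Rs p 0) \<le> h * Qs p 0)"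
    proof (rule Suc.IH)
      show "Suc j + l + 2 \<le> n" using Suc.prems by simp
      show "0 \<le> h" "seqd V" "seqd W" "seqd X" using Suc.prems by auto
      show "\<forall>r<Suc j. seqd (shc (V \<circ> Suc) A r)" using Suc.prems by (auto simp: less_Suc_eq_0_disj seqd_Suc)
      show "\<forall>r<Suc j. seqd (shc (W \<circ> Suc) Cc r)" using Suc.prems by (auto simp: less_Suc_eq_0_disj seqd_Suc)
      show "\<forall>r<Suc j. seqd (shc (X \<circ> Suc) B r)" using Suc.prems by (auto simp: less_Suc_eq_0_disj seqd_Suc)
      show "\<forall>p\<le>l. norm (V p 0) \<le> X p 0 \<and> norm (W p 0) \<le> X p 0 \<and> norm (V p 0 - W p 0) \<le> h * X p 0"
        using Suc.prems by auto
      show "\<forall>r<Suc j. \<forall>p\<le>l. norm (shc (V \<circ> Suc) A r p 0) \<le> shc (X \<circ> Suc) B r p 0 \<and>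
          norm (shc (W \<circ> Suc) Cc r p 0) \<le> shc (X \<circ> Suc) B r p 0 \<and>
          norm (shc (V \<circ> Suc) A r p 0 - shc (W \<circ> Suc) Cc r p 0) \<le> h * shc (X \<circ> Suc) B r p 0"
        using Suc.prems by (auto simp: less_Suc_eq_0_disj)
    qed
    then show ?thesis using that by blast
  qed
  let ?P = "\<lambda>r PRQ. Cs l (Psi F j V (A(r := A r \<circ> Suc))) (fst PRQ) \<and> Cs l (Psi F j W (Cc(r := Cc r \<circ> Suc))) (fst (snd PRQ))
        \<and> Cs l (xi Nd j X (B(r := B r \<circ> Suc))) (snd (snd PRQ))
        \<and> (\<forall>p\<le>l. mat_norm (fst PRQ p 0 - fst (snd PRQ) p 0) \<le> h * snd (snd PRQ) p 0)"
  have "\<forall>r. \<exists>PRQ. r < j \<longrightarrow> ?P r PRQ"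
  proof (intro allI)
    fix r
    show "\<exists>PRQ. r < j \<longrightarrow> ?P r PRQ"
    proof (cases "r < j")
      case True
      have "\<exists>Ps Rs Qs. Cs l (Psi F j V (A(r := A r \<circ> Suc))) Ps \<and> Cs l (Psi F j W (Cc(r := Cc r \<circ> Suc))) Rs
        \<and> Cs l (xi Nd j X (B(r := B r \<circ> Suc))) Qs \<and> (\<forall>p\<le>l. mat_norm (Ps p 0 - Rs p 0) \<le> h * Qs p 0)"
      proof (rule Suc.IH)
        show "j + l + 2 \<le> n" using Suc.prems by simp
        show "0 \<le> h" "seqd V" "seqd W" "seqd X" using Suc.prems by auto
        show "\<forall>r'<j. seqd ((A(r := A r \<circ> Suc)) r')" using Suc.prems by (auto simp: seqd_Suc)
        show "\<forall>r'<j. seqd ((Cc(r := Cc r \<circ> Suc)) r')" using Suc.prems by (auto simp: seqd_Suc)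
        show "\<forall>r'<j. seqd ((B(r := B r \<circ> Suc)) r')" using Suc.prems by (auto simp: seqd_Suc)
        show "\<forall>p\<le>l. norm (V p 0) \<le> X p 0 \<and> norm (W p 0) \<le> X p 0 \<and> norm (V p 0 - W p 0) \<le> h * X p 0"
          using Suc.prems by auto
        show "\<forall>r'<j. \<forall>p\<le>l. norm ((A(r := A r \<circ> Suc)) r' p 0) \<le> (B(r := B r \<circ> Suc)) r' p 0 \<and>
           norm ((Cc(r := Cc r \<circ> Suc)) r' p 0) \<le> (B(r := B r \<circ> Suc)) r' p 0 \<and>
           norm ((A(r := A r \<circ> Suc)) r' p 0 - (Cc(r := Cc r \<circ> Suc)) r' p 0) \<le> h * (B(r := B r \<circ> Suc)) r' p 0"
          using Suc.prems by auto
      qed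
      then show ?thesis by (metis fst_conv snd_conv)
    qed simp
  qed
  then obtain PRQ where PRQ: "\<And>r. r < j \<Longrightarrow> ?P r (PRQ r)" by metis
  define Ps where "Ps = (\<lambda>p. if p = 0 then Psi F j V A else (\<lambda>t. PsN (p-1) t + (\<Sum>r<j. fst (PRQ r) (p-1) t)))"
  define Rs where "Rs = (\<lambda>p. if p = 0 then Psi F j W Cc else (\<lambda>t. RsN (p-1) t + (\<Sum>r<j. fst (snd (PRQ r)) (p-1) t)))"
  define Qs where "Qs = (\<lambda>p. if p = 0 then xi Nd j X B else (\<lambda>t. QsN (p-1) t + (\<Sum>r<j. snd (snd (PRQ r)) (p-1) t)))"
  have C1: "Cs (Suc l) (Psi F j V A) Ps"
    unfolding Ps_def by (rule Cs_step[OF N(1)]) (use PRQ Suc.prems in \<open>auto intro!: DPsi\<close>)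
  have C2: "Cs (Suc l) (Psi F j W Cc) Rs"
    unfolding Rs_def by (rule Cs_step[OF N(2)]) (use PRQ Suc.prems in \<open>auto intro!: DPsi\<close>)
  have C3: "Cs (Suc l) (xi Nd j X B) Qs"
    unfolding Qs_def by (rule Cs_step[OF N(3)]) (use PRQ Suc.prems in \<open>auto intro!: Dxi\<close>)
  have bd: "mat_norm (Ps p 0 - Rs p 0) \<le> h * Qs p 0" if p: "p \<le> Suc l" for p
  proof (cases p)
    case 0 then show ?thesis using base by (simp add: Ps_def Qs_def Rs_def)
  next
    case (Suc q)
    with p have q: "q \<le> l" by simp
    have eq: "Ps p 0 - Rs p 0 = (PsN q 0 - RsN q 0) + (\<Sum>r<j. fst (PRQ r) q 0 - fst (snd (PRQ r)) q 0)"
      using Suc by (simp add: Ps_def Rs_def sum_subtractf)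
    have "mat_norm ((PsN q 0 - RsN q 0) + (\<Sum>r<j. fst (PRQ r) q 0 - fst (snd (PRQ r)) q 0))
       \<le> mat_norm (PsN q 0 - RsN q 0) + (\<Sum>r<j. mat_norm (fst (PRQ r) q 0 - fst (snd (PRQ r)) q 0))"
      using mat_norm_add[of "PsN q 0 - RsN q 0" "\<Sum>r<j. fst (PRQ r) q 0 - fst (snd (PRQ r)) q 0"]
        mat_norm_sum[of "\<lambda>r. fst (PRQ r) q 0 - fst (snd (PRQ r)) q 0" "{..<j}"] by linarith
    also have "\<dots> \<le> h * QsN q 0 + (\<Sum>r<j. h * snd (snd (PRQ r)) q 0)"
      using N(4) PRQ q by (intro add_mono sum_mono) auto
    also have "\<dots> = h * Qs p 0" using Suc by (simp add: Qs_def sum_distrib_left algebra_simps)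
    finally show ?thesis unfolding eq .
  qed
  show ?case using C1 C2 C3 bd by blast
qed

end


definition pseq :: "(nat \<Rightarrow> 'a::real_normed_vector) \<Rightarrow> nat \<Rightarrow> nat \<Rightarrow> real \<Rightarrow> 'a" where
  "pseq v k p \<tau> = (\<Sum>i\<le>k. (if p \<le> i then fact i / fact (i - p) * \<tau> ^ (i - p) else 0) *\<^sub>R v i)"

lemma pseq_0: "pseq v k 0 = (\<lambda>\<tau>. \<Sum>i\<le>k. \<tau> ^ i *\<^sub>R v i)"
  by (rule ext) (simp add: pseq_def)

lemma pseq_at0: "p \<le> k \<Longrightarrow> pseq v k p 0 = fact p *\<^sub>R v p"
proof -
  assume p: "p \<le> k"
  have "pseq v k p 0 = (\<Sum>i\<le>k. (if i = p then fact p *\<^sub>R v p else 0))"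
    unfolding pseq_def by (intro sum.cong refl) auto
  also have "\<dots> = fact p *\<^sub>R v p" using p by simp
  finally show ?thesis .
qed

lemma mono_deriv:
  "((\<lambda>\<tau>. (if p \<le> i then fact i / fact (i - p) * \<tau> ^ (i - p) else 0) :: real) has_real_derivative
     (if Suc p \<le> i then fact i / fact (i - Suc p) * \<tau> ^ (i - Suc p) else 0)) (at \<tau>)"
proof (cases "Suc p \<le> i")
  case True
  define m where "m = i - Suc p"
  have im: "i - p = Suc m" using True by (simp add: m_def)
  have "((\<lambda>\<tau>. fact i / fact (Suc m) * \<tau> ^ Suc m :: real) has_real_derivative
      fact i / fact (Suc m) * (real (Suc m) * \<tau> ^ m)) (at \<tau>)"
    by (intro derivative_eq_intros) auto
  moreover have "fact i / fact (Suc m) * (real (Suc m) * \<tau> ^ m) = fact i / fact m * \<tau> ^ m"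
    by (simp add: fact_Suc field_simps del: of_nat_Suc)
  ultimately show ?thesis using True by (simp add: im m_def)
next
  case False
  then show ?thesis by (cases "p \<le> i") auto
qed

lemma seqd_pseq: "seqd (pseq v k)"
  unfolding seqd_def pseq_def
proof (intro allI)
  fix p \<tau>
  show "((\<lambda>\<tau>. \<Sum>i\<le>k. (if p \<le> i then fact i / fact (i - p) * \<tau> ^ (i - p) else 0) *\<^sub>R v i) has_vector_derivative
      (\<Sum>i\<le>k. (if Suc p \<le> i then fact i / fact (i - Suc p) * \<tau> ^ (i - Suc p) else 0) *\<^sub>R v i)) (at \<tau>)"
  proof (rule has_vector_derivative_sum)
    fix i
    have "((\<lambda>\<tau>. (if p \<le> i then fact i / fact (i - p) * \<tau> ^ (i - p) else 0) *\<^sub>R v i) has_vector_derivative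
      (if p \<le> i then fact i / fact (i - p) * \<tau> ^ (i - p) else 0) *\<^sub>R 0 + (if Suc p \<le> i then fact i / fact (i - Suc p) * \<tau> ^ (i - Suc p) else 0) *\<^sub>R v i) (at \<tau>)"
      by (rule has_vector_derivative_scaleR[OF mono_deriv has_vector_derivative_const])
    then show "((\<lambda>\<tau>. (if p \<le> i then fact i / fact (i - p) * \<tau> ^ (i - p) else 0) *\<^sub>R v i) has_vector_derivative
      (if Suc p \<le> i then fact i / fact (i - Suc p) * \<tau> ^ (i - Suc p) else 0) *\<^sub>R v i) (at \<tau>)" by simp
  qed
qed

lemma mvt_within:
  fixes f :: "real \<Rightarrow> 'b::real_normed_vector"
  assumes "a \<le> b"
    and d: "\<And>x. x \<in> {a..b} \<Longrightarrow> (f has_vector_derivative f' x) (at x within {a..b})"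
    and B: "\<And>x. x \<in> {a..b} \<Longrightarrow> norm (f' x) \<le> B"
  shows "norm (f b - f a) \<le> B * (b - a)"
proof -
  have "norm (f b - f a) \<le> B * norm (b - a)"
  proof (rule differentiable_bound[where S="{a..b}" and f'="\<lambda>x h. h *\<^sub>R f' x"])
    fix x assume x: "x \<in> {a..b}"
    show "(f has_derivative (\<lambda>h. h *\<^sub>R f' x)) (at x within {a..b})"
      using d[OF x] unfolding has_vector_derivative_def .
    show "onorm (\<lambda>h. h *\<^sub>R f' x) \<le> B"
      using B[OF x] by (simp add: onorm_scaleR_left onorm_id)
  qed (use assms in auto)
  then show ?thesis using assms by simp
qed

lemma DF_0: "DF F 0 u a = F u"
proof -
  have "{is::'m list. length is = 0} = {[]}" by auto
  then show ?thesis by (simp add: DF_def)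
qed

lemma grid_index:
  assumes g: "is_grid t0 grid" and t: "t0 \<le> t"
  shows "\<exists>!i. grid i \<le> t \<and> t < grid (Suc i)"
proof -
  have sm: "strict_mono grid" and g0: "grid 0 = t0" and lim: "filterlim grid at_top sequentially"
    using g by (auto simp: is_grid_def)
  have "eventually (\<lambda>m. t + 1 \<le> grid m) sequentially" using lim by (simp add: filterlim_at_top)
  then obtain M where M: "t + 1 \<le> grid M" by (auto simp: eventually_sequentially)
  define m where "m = (LEAST m. t < grid m)"
  have tm: "t < grid m" unfolding m_def by (rule LeastI[of _ M]) (use M in simp)
  have m0: "m \<noteq> 0" proof assume "m = 0" then show False using tm g0 t by simp qed
  then obtain i where i: "m = Suc i" by (cases m) auto
  have "\<not> t < grid i" using not_less_Least[of i "\<lambda>m. t < grid m"] unfolding m_def[symmetric] i by simp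
  then have ex: "grid i \<le> t \<and> t < grid (Suc i)" using tm i by simp
  show ?thesis
  proof (rule ex1I[of _ i])
    show "grid i \<le> t \<and> t < grid (Suc i)" by (rule ex)
    fix i' assume i': "grid i' \<le> t \<and> t < grid (Suc i')"
    show "i' = i"
    proof (rule ccontr)
      assume "i' \<noteq> i"
      then have "Suc i' \<le> i \<or> Suc i \<le> i'" by arith
      then show False
      proof
        assume "Suc i' \<le> i" then have "grid (Suc i') \<le> grid i" using sm strict_mono_leD by blast
        then show False using i' ex by simp
      next
        assume "Suc i \<le> i'" then have "grid (Suc i) \<le> grid i'" using sm strict_mono_leD by blast
        then show False using i' ex by simp
      qed
    qed
  qed
qed


lemma norm_le_norm0:
  assumes "bounded (u ` {t0..})" "t0 \<le> s"
  shows "norm (u s) \<le> norm0 t0 u"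
proof -
  obtain a where a: "\<forall>y\<in>u ` {t0..}. norm y \<le> a" using assms(1) by (auto simp: bounded_iff)
  have bdd: "bdd_above ((\<lambda>s. norm (u s)) ` {t0..})" using a by (auto intro!: bdd_aboveI[of _ a])
  show ?thesis unfolding norm0_def using cSUP_upper[of s "{t0..}" "\<lambda>s. norm (u s)", OF _ bdd] assms(2) by simp
qed

lemma le_norm1:
  assumes "bdd_above (deriv_norms grid u)" "x \<in> {grid i..grid (Suc i)}"
  shows "norm (vector_derivative u (at x within {grid i..grid (Suc i)})) \<le> norm1 grid u"
  unfolding norm1_def by (rule cSup_upper) (use assms in \<open>auto simp: deriv_norms_def\<close>)

theorem lemma4:
  fixes n :: nat and t0 :: real
    and N :: "real \<Rightarrow> real^'m \<Rightarrow> real^'m^'m"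
    and Nt :: "real \<Rightarrow> real"
  assumes n_pos: "n \<ge> 1"
    and N_cont_t: "\<And>u. continuous_on {t0..} (\<lambda>t. N t u)"
    and N_partials: "\<And>is t u i. length is < n \<Longrightarrow> t \<ge> t0 \<Longrightarrow>
          ((\<lambda>s. partials is (N t) (u + s *\<^sub>R axis i 1)) has_vector_derivative
             partials (i # is) (N t) u) (at 0)"
    and N_partials_cont: "\<And>is. 1 \<le> length is \<Longrightarrow> length is \<le> n \<Longrightarrow>
          continuous_on ({t0..} \<times> UNIV) (\<lambda>(t, u). partials is (N t) u)"
    and Nt_diff: "\<And>k x. k < n \<Longrightarrow> ((deriv ^^ k) Nt has_real_derivative (deriv ^^ Suc k) Nt x) (at x)"
    and Nt_cont: "continuous_on UNIV ((deriv ^^ n) Nt)"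
    and Nt_nonneg: "\<And>k u. k \<le> n \<Longrightarrow> u \<ge> 0 \<Longrightarrow> (deriv ^^ k) Nt u \<ge> 0"
    and bound: "\<And>t u k. t \<ge> t0 \<Longrightarrow> k \<le> n \<Longrightarrow>
          (\<Sum>\<kappa>\<in>{\<kappa>::'m \<Rightarrow> nat. (\<Sum>i\<in>UNIV. \<kappa> i) = k}.
             (fact k / (\<Prod>i\<in>UNIV. fact (\<kappa> i))) * mat_norm (mixed_partial \<kappa> (N t) u))
          \<le> (deriv ^^ k) Nt (norm u)"
    and t_ge: "t \<ge> t0"
  shows "(\<forall>k < n. \<forall>us :: nat \<Rightarrow> real \<Rightarrow> real^'m. (\<forall>i\<le>k. us i \<in> V0 t0) \<longrightarrow>
            mat_norm (adomian k (N t) (\<lambda>i. us i t)) \<le> adomian k Nt (\<lambda>i. norm0 t0 (us i)))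
       \<and> (\<forall>grid. is_grid t0 grid \<longrightarrow>
            (\<forall>k. k + 2 \<le> n \<longrightarrow> (\<forall>us :: nat \<Rightarrow> real \<Rightarrow> real^'m. (\<forall>i\<le>k. us i \<in> V1 t0 grid) \<longrightarrow>
               mat_norm (adomian k (N t) (\<lambda>i. us i t) - adomian k (N t) (\<lambda>i. Ph grid (us i) t))
                 \<le> step_h grid * adomian k (\<lambda>x. deriv Nt x * x) (\<lambda>i. normV t0 grid (us i)))))"
proof -
  interpret A: adom "N t" n "\<lambda>k. (deriv ^^ k) Nt"
  proof (unfold_locales)
    fix "is" :: "'m list" and u i
    assume "length is < n"
    then show "((\<lambda>s. partials is (N t) (u + s *\<^sub>R axis i 1)) has_vector_derivative partials (i # is) (N t) u) (at 0)"
      using N_partials t_ge by blast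
  next
    fix "is" :: "'m list"
    assume "1 \<le> length is" "length is \<le> n"
    then have c: "continuous_on ({t0..} \<times> UNIV) (\<lambda>(t, u). partials is (N t) u)" by (rule N_partials_cont)
    have "continuous_on UNIV (\<lambda>u. (\<lambda>(t, u). partials is (N t) u) (t, u))"
      by (rule continuous_on_compose2[OF c]) (auto intro!: continuous_intros simp: t_ge)
    then show "continuous_on UNIV (partials is (N t))" by simp
  next
    fix k x assume "k < n"
    then show "((deriv ^^ k) Nt has_real_derivative (deriv ^^ Suc k) Nt x) (at x)" by (rule Nt_diff)
  next
    fix k u assume "k \<le> n" "(0::real) \<le> u"
    then show "0 \<le> (deriv ^^ k) Nt u" by (rule Nt_nonneg)
  next
    fix u k assume "k \<le> n"
    then show "(\<Sum>\<kappa>\<in>{\<kappa>::'m \<Rightarrow> nat. (\<Sum>i\<in>UNIV. \<kappa> i) = k}.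
             (fact k / (\<Prod>i\<in>UNIV. fact (\<kappa> i))) * mat_norm (mixed_partial \<kappa> (N t) u))
          \<le> (deriv ^^ k) Nt (norm u)" by (rule bound[OF t_ge])
  qed
  define Nd where "Nd = (\<lambda>k. (deriv ^^ k) Nt)"
  have partA: "\<forall>k < n. \<forall>us :: nat \<Rightarrow> real \<Rightarrow> real^'m. (\<forall>i\<le>k. us i \<in> V0 t0) \<longrightarrow>
            mat_norm (adomian k (N t) (\<lambda>i. us i t)) \<le> adomian k Nt (\<lambda>i. norm0 t0 (us i))"
  proof (intro allI impI)
    fix k and us :: "nat \<Rightarrow> real \<Rightarrow> real^'m"
    assume k: "k < n" and us: "\<forall>i\<le>k. us i \<in> V0 t0"
    define v where "v = (\<lambda>i. us i t)"
    define x where "x = (\<lambda>i. norm0 t0 (us i))"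
    have vx: "norm (v i) \<le> x i" if "i \<le> k" for i
      unfolding v_def x_def by (rule norm_le_norm0) (use us that t_ge in \<open>auto simp: V0_def\<close>)
    have bnd: "\<forall>p\<le>k. norm (pseq v k p 0) \<le> pseq x k p 0"
      using vx by (auto simp: pseq_at0)
    obtain Ps Qs where PQ: "Cs k (Psi (N t) 0 (pseq v k) (\<lambda>_ _ _. 0)) Ps" "Cs k (psi Nd 0 (pseq x k) (\<lambda>_ _ _. 0)) Qs"
      "\<forall>p\<le>k. mat_norm (Ps p 0) \<le> Qs p 0"
      using A.claimA[where j=0 and l=k and V="pseq v k" and A="\<lambda>_ _ _. 0" and X="pseq x k" and B="\<lambda>_ _ _. 0"]
        k seqd_pseq[of v k] seqd_pseq[of x k] bnd unfolding Nd_def by auto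
    have e1: "Psi (N t) 0 (pseq v k) (\<lambda>_ _ _. 0) = (\<lambda>\<tau>. N t (\<Sum>i\<le>k. \<tau> ^ i *\<^sub>R us i t))"
      by (simp add: Psi_def DF_0 pseq_0 v_def)
    have e2: "psi Nd 0 (pseq x k) (\<lambda>_ _ _. 0) = (\<lambda>\<tau>. Nt (\<Sum>i\<le>k. \<tau> ^ i *\<^sub>R norm0 t0 (us i)))"
      by (simp add: psi_def pseq_0 x_def Nd_def)
    have a1: "adomian k (N t) (\<lambda>i. us i t) = (1 / fact k) *\<^sub>R Ps k 0"
      unfolding adomian_def using Cs_vderiv[OF PQ(1), of k] e1 by simp
    have a2: "adomian k Nt (\<lambda>i. norm0 t0 (us i)) = (1 / fact k) * Qs k 0"
      unfolding adomian_def using Cs_vderiv[OF PQ(2), of k] e2 by simp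
    show "mat_norm (adomian k (N t) (\<lambda>i. us i t)) \<le> adomian k Nt (\<lambda>i. norm0 t0 (us i))"
      unfolding a1 a2 mat_norm_scaleR using PQ(3) by (simp add: divide_right_mono)
  qed
  have partB: "\<forall>grid. is_grid t0 grid \<longrightarrow>
            (\<forall>k. k + 2 \<le> n \<longrightarrow> (\<forall>us :: nat \<Rightarrow> real \<Rightarrow> real^'m. (\<forall>i\<le>k. us i \<in> V1 t0 grid) \<longrightarrow>
               mat_norm (adomian k (N t) (\<lambda>i. us i t) - adomian k (N t) (\<lambda>i. Ph grid (us i) t))
                 \<le> step_h grid * adomian k (\<lambda>x. deriv Nt x * x) (\<lambda>i. normV t0 grid (us i))))"
  proof (intro allI impI)
    fix grid k and us :: "nat \<Rightarrow> real \<Rightarrow> real^'m"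
    assume g: "is_grid t0 grid" and k: "k + 2 \<le> n" and us: "\<forall>i\<le>k. us i \<in> V1 t0 grid"
    define h where "h = step_h grid"
    have sm: "strict_mono grid" and g0: "grid 0 = t0" and bh: "bdd_above (range (\<lambda>i. grid (Suc i) - grid i))"
      using g by (auto simp: is_grid_def)
    define J where "J = (THE i. grid i \<le> t \<and> t < grid (Suc i))"
    have J: "grid J \<le> t \<and> t < grid (Suc J)"
      unfolding J_def by (rule theI'[OF grid_index[OF g t_ge]])
    have gJ: "t0 \<le> grid J" using strict_mono_leD[OF sm, of 0 J] g0 by simp
    have hJ: "grid (Suc J) - grid J \<le> h" unfolding h_def step_h_def by (rule cSUP_upper[OF _ bh]) simp
    have h0: "0 \<le> h"
    proof -
      have "grid 0 < grid (Suc 0)" using sm by (simp add: strict_mono_def)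
      moreover have "grid (Suc 0) - grid 0 \<le> h" unfolding h_def step_h_def by (rule cSUP_upper[OF _ bh]) simp
      ultimately show ?thesis by simp
    qed
    define v where "v = (\<lambda>i. us i t)"
    define w where "w = (\<lambda>i. us i (grid J))"
    define X where "X = (\<lambda>i. normV t0 grid (us i))"
    have w_eq: "(\<lambda>i. Ph grid (us i) t) = w" by (simp add: Ph_def w_def J_def)
    have facts: "norm (v i) \<le> X i \<and> norm (w i) \<le> X i \<and> norm (v i - w i) \<le> h * X i" if i: "i \<le> k" for i
    proof -
      have u: "us i \<in> V1 t0 grid" using us i by simp
      have bd: "bounded (us i ` {t0..})" using u by (simp add: V1_def)
      have bdd: "bdd_above (deriv_norms grid (us i))" using u by (simp add: V1_def)
      have n0: "norm (v i) \<le> norm0 t0 (us i)" unfolding v_def by (rule norm_le_norm0[OF bd t_ge])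
      have n0w: "norm (w i) \<le> norm0 t0 (us i)" unfolding w_def by (rule norm_le_norm0[OF bd gJ])
      have n1: "0 \<le> norm1 grid (us i)"
      proof -
        have "grid 0 \<in> {grid 0..grid (Suc 0)}" using sm by (simp add: strict_mono_def less_imp_le)
        from le_norm1[OF bdd this] show ?thesis by (meson norm_ge_zero order_trans)
      qed
      have mvt: "norm (us i t - us i (grid J)) \<le> norm1 grid (us i) * (t - grid J)"
      proof (rule mvt_within[where f'="\<lambda>x. vector_derivative (us i) (at x within {grid J..grid (Suc J)})"])
        show "grid J \<le> t" using J by simp
        fix y assume y: "y \<in> {grid J..t}"
        then have yI: "y \<in> {grid J..grid (Suc J)}" using J by auto
        have "us i differentiable (at y within {grid J..grid (Suc J)})" using u yI by (simp add: V1_def)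
        then have "(us i has_vector_derivative vector_derivative (us i) (at y within {grid J..grid (Suc J)})) (at y within {grid J..grid (Suc J)})"
          by (simp add: vector_derivative_works[symmetric])
        then show "(us i has_vector_derivative vector_derivative (us i) (at y within {grid J..grid (Suc J)})) (at y within {grid J..t})"
          by (rule has_vector_derivative_within_subset) (use J in auto)
        show "norm (vector_derivative (us i) (at y within {grid J..grid (Suc J)})) \<le> norm1 grid (us i)"
          by (rule le_norm1[OF bdd yI])
      qed
      have "norm1 grid (us i) * (t - grid J) \<le> norm1 grid (us i) * h"
        using n1 J hJ by (intro mult_left_mono) auto
      also have "\<dots> \<le> h * X i" using h0 by (simp add: X_def normV_def mult.commute mult_left_mono)
      finally have "norm (v i - w i) \<le> h * X i" using mvt by (simp add: v_def w_def)
      moreover have "norm (v i) \<le> X i" "norm (w i) \<le> X i" using n0 n0w by (auto simp: X_def normV_def)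
      ultimately show ?thesis by simp
    qed
    have bnd: "\<forall>p\<le>k. norm (pseq v k p 0) \<le> pseq X k p 0 \<and> norm (pseq w k p 0) \<le> pseq X k p 0 \<and>
        norm (pseq v k p 0 - pseq w k p 0) \<le> h * pseq X k p 0"
    proof (intro allI impI)
      fix p assume p: "p \<le> k"
      have "norm (fact p *\<^sub>R v p - fact p *\<^sub>R w p) = fact p * norm (v p - w p)"
        by (simp flip: scaleR_diff_right)
      then show "norm (pseq v k p 0) \<le> pseq X k p 0 \<and> norm (pseq w k p 0) \<le> pseq X k p 0 \<and>
        norm (pseq v k p 0 - pseq w k p 0) \<le> h * pseq X k p 0"
        using facts[OF p] p by (auto simp: pseq_at0 mult_left_mono algebra_simps)
    qed
    obtain Ps Rs Qs where PQ: "Cs k (Psi (N t) 0 (pseq v k) (\<lambda>_ _ _. 0)) Ps" "Cs k (Psi (N t) 0 (pseq w k) (\<lambda>_ _ _. 0)) Rs"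
      "Cs k (xi Nd 0 (pseq X k) (\<lambda>_ _ _. 0)) Qs"
      "\<forall>p\<le>k. mat_norm (Ps p 0 - Rs p 0) \<le> h * Qs p 0"
      using A.claimD[where j=0 and l=k and h=h and V="pseq v k" and W="pseq w k" and A="\<lambda>_ _ _. 0"
          and Cc="\<lambda>_ _ _. 0" and X="pseq X k" and B="\<lambda>_ _ _. 0"]
        k h0 seqd_pseq[of v k] seqd_pseq[of w k] seqd_pseq[of X k] bnd unfolding Nd_def by auto
    have e1: "Psi (N t) 0 (pseq v k) (\<lambda>_ _ _. 0) = (\<lambda>\<tau>. N t (\<Sum>i\<le>k. \<tau> ^ i *\<^sub>R us i t))"
      by (simp add: Psi_def DF_0 pseq_0 v_def)
    have e2: "Psi (N t) 0 (pseq w k) (\<lambda>_ _ _. 0) = (\<lambda>\<tau>. N t (\<Sum>i\<le>k. \<tau> ^ i *\<^sub>R w i))"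
      by (simp add: Psi_def DF_0 pseq_0)
    have e3: "xi Nd 0 (pseq X k) (\<lambda>_ _ _. 0) = (\<lambda>\<tau>. (\<lambda>x. deriv Nt x * x) (\<Sum>i\<le>k. \<tau> ^ i *\<^sub>R X i))"
      by (simp add: xi_def pseq_0 Nd_def)
    have a1: "adomian k (N t) (\<lambda>i. us i t) = (1 / fact k) *\<^sub>R Ps k 0"
      unfolding adomian_def using Cs_vderiv[OF PQ(1), of k] e1 by simp
    have a2: "adomian k (N t) w = (1 / fact k) *\<^sub>R Rs k 0"
      unfolding adomian_def using Cs_vderiv[OF PQ(2), of k] e2 by simp
    have a3: "adomian k (\<lambda>x. deriv Nt x * x) X = (1 / fact k) * Qs k 0"
      unfolding adomian_def using Cs_vderiv[OF PQ(3), of k] e3 by simp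
    have "mat_norm (adomian k (N t) (\<lambda>i. us i t) - adomian k (N t) w) = (1 / fact k) * mat_norm (Ps k 0 - Rs k 0)"
      unfolding a1 a2 by (simp flip: scaleR_diff_right add: mat_norm_scaleR)
    also have "\<dots> \<le> (1 / fact k) * (h * Qs k 0)" using PQ(4) by (simp add: divide_right_mono)
    also have "\<dots> = h * adomian k (\<lambda>x. deriv Nt x * x) X" unfolding a3 by simp
    finally show "mat_norm (adomian k (N t) (\<lambda>i. us i t) - adomian k (N t) (\<lambda>i. Ph grid (us i) t))
                 \<le> step_h grid * adomian k (\<lambda>x. deriv Nt x * x) (\<lambda>i. normV t0 grid (us i))"
      unfolding w_eq h_def X_def .
  qed
  show ?thesis using partA partB by blast
qed

end
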